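(* Let $\rho>0$ and assume $\Gamma(0)<\Gamma(1)$ and $1+\rho\ln\mu(0)<0$. Let $\nu_\star(\rho)$ be the unique solution in $(0,\mu(1))$ of $1+\rho\ln G(\nu,\mu(1))=0$. Then for every $\rho$-admissible scaling $n\mapsto L_n$, \[ \lim_{n\to\infty}\mathbb{E}[I_n(L_n)]=\begin{cases}\infty&\text{if } 1+\rho\ln\big(\Gamma(1)^{\nu_\star(\rho)}\Gamma(0)^{1-\nu_\star(\rho)}\big)<0,\\ 0&\text{if } 1+\rho\ln\big(\Gamma(1)^{\nu_\star(\rho)}\Gamma(0)^{1-\nu_\star(\rho)}\big)>0.\end{cases} \]
   Context: Homogeneous binary MAG model. Fix $\mu(0),\mu(1)\in(0,1)$ with $\mu(0)+\mu(1)=1$, and a symmetric $2\times2$ matrix $(q(a,b))$ with $q(0,1)=q(1,0)$ and $0<q(a,b)<1$. On a probability space, $\{A,A_\ell(u):\ell,u\ge1\}$ are i.i.d. $\{0,1\}$-valued with $\mathbb{P}[A=1]=\mu(1)$, independent of i.i.d. uniform$(0,1)$ variables $\{U(u,v):1\le u<v\}$, $U(v,u)=U(u,v)$. With $\mathbf A_L(u)=(A_1(u),\dots,A_L(u))$ and $Q_L(\mathbf a,\mathbf b)=\prod_{\ell=1}^Lq(a_\ell,b_\ell)$, the graph $\mathbb{M}(n;L)$ on $\{1,\dots,n\}$ has an edge between distinct $u,v$ iff $U(u,v)\le Q_L(\mathbf A_L(u),\mathbf A_L(v))$. $I_n(L)$ is the number of isolated nodes in $\mathbb{M}(n;L)$.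 $\Gamma(a)=\mathbb{E}[q(a,A)]$. A scaling $n\mapsto L_n$ of positive integers is $\rho$-admissible if $L_n\sim\rho\ln n$. For $0<\nu,\mu<1$, $G(\nu,\mu)=(\mu/\nu)^\nu\big((1-\mu)/(1-\nu)\big)^{1-\nu}$, extended continuously to $\nu\in[0,1]$ by $G(0,\mu)=1-\mu$, $G(1,\mu)=\mu$. *)

theory Defs
  imports "HOL-Probability.Probability" "HOL-Library.Landau_Symbols"
begin

text \<open>Binary MAG model. Attribute values are encoded as naturals 0 and 1.
  \<open>mu\<close> gives mu(0), mu(1); \<open>q\<close> is the 2x2 affinity matrix.\<close>

definition Gam :: "(nat \<Rightarrow> real) \<Rightarrow> (nat \<Rightarrow> nat \<Rightarrow> real) \<Rightarrow> nat \<Rightarrow> real" where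
  "Gam mu q a = mu 0 * q a 0 + mu 1 * q a 1"

definition G :: "real \<Rightarrow> real \<Rightarrow> real" where
  "G \<nu> m = (if \<nu> = 0 then 1 - m else if \<nu> = 1 then m
            else (m / \<nu>) powr \<nu> * ((1 - m) / (1 - \<nu>)) powr (1 - \<nu>))"

definition QL :: "(nat \<Rightarrow> nat \<Rightarrow> real) \<Rightarrow> (nat \<Rightarrow> nat \<Rightarrow> 'w \<Rightarrow> nat) \<Rightarrow> nat \<Rightarrow> nat \<Rightarrow> nat \<Rightarrow> 'w \<Rightarrow> real" where
  "QL q A L u v \<omega> = (\<Prod>l\<in>{1..L}. q (A l u \<omega>) (A l v \<omega>))"

text \<open>Edge between distinct u, v in M(n;L); U is only used for u < v (U(v,u) = U(u,v)).\<close>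
definition edge :: "(nat \<Rightarrow> nat \<Rightarrow> real) \<Rightarrow> (nat \<Rightarrow> nat \<Rightarrow> 'w \<Rightarrow> nat) \<Rightarrow> (nat \<Rightarrow> nat \<Rightarrow> 'w \<Rightarrow> real)
    \<Rightarrow> nat \<Rightarrow> nat \<Rightarrow> nat \<Rightarrow> 'w \<Rightarrow> bool" where
  "edge q A U L u v \<omega> = (u \<noteq> v \<and> U (min u v) (max u v) \<omega> \<le> QL q A L u v \<omega>)"

definition isolated_count :: "(nat \<Rightarrow> nat \<Rightarrow> real) \<Rightarrow> (nat \<Rightarrow> nat \<Rightarrow> 'w \<Rightarrow> nat) \<Rightarrow> (nat \<Rightarrow> nat \<Rightarrow> 'w \<Rightarrow> real)
    \<Rightarrow> nat \<Rightarrow> nat \<Rightarrow> 'w \<Rightarrow> nat" where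
  "isolated_count q A U n L \<omega> = card {u\<in>{1..n}. \<forall>v\<in>{1..n}. \<not> edge q A U L u v \<omega>}"

definition mag_family :: "(nat \<Rightarrow> nat \<Rightarrow> 'w \<Rightarrow> nat) \<Rightarrow> (nat \<Rightarrow> nat \<Rightarrow> 'w \<Rightarrow> real)
    \<Rightarrow> (nat \<times> nat) + (nat \<times> nat) \<Rightarrow> 'w \<Rightarrow> real" where
  "mag_family A U i = (case i of Inl (l, u) \<Rightarrow> (\<lambda>\<omega>. real (A l u \<omega>)) | Inr (u, v) \<Rightarrow> U u v)"

definition mag_index :: "((nat \<times> nat) + (nat \<times> nat)) set" where
  "mag_index = {Inl (l, u) | l u. 1 \<le> l \<and> 1 \<le> u} \<union> {Inr (u, v) | u v. 1 \<le> u \<and> u < v}"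

definition admissible :: "real \<Rightarrow> (nat \<Rightarrow> nat) \<Rightarrow> bool" where
  "admissible \<rho> L \<longleftrightarrow> (\<forall>n. 0 < L n) \<and> (\<lambda>n. real (L n)) \<sim>[sequentially] (\<lambda>n. \<rho> * ln (real n))"

end

theory Submission
  imports Defs "HOL-Real_Asymp.Real_Asymp"
begin

lemma phi_mono:
  fixes m a b :: real
  assumes "0 < a" "a < b" "b < m" "m < 1"
  shows "a * ln (m / a) + (1 - a) * ln ((1 - m) / (1 - a)) < b * ln (m / b) + (1 - b) * ln ((1 - m) / (1 - b))"
proof -
  define f where "f x = x * ln m - x * ln x + (1 - x) * ln (1 - m) - (1 - x) * ln (1 - x)" for x :: real
  have eq: "x * ln (m / x) + (1 - x) * ln ((1 - m) / (1 - x)) = f x" if "0 < x" "x < m" for x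
    using that assms by (simp add: f_def ln_div algebra_simps)
  have "f a < f b"
  proof (rule DERIV_pos_imp_increasing[OF assms(2)])
    fix x assume x: "a \<le> x" "x \<le> b"
    then have x0: "0 < x" "x < m" "x < 1" using assms by auto
    have "DERIV f x :> (ln m - ln x - ln (1 - m) + ln (1 - x))"
      unfolding f_def using x0
      by (auto intro!: derivative_eq_intros)
    moreover have "ln x < ln m" "ln (1 - m) < ln (1 - x)" using x0 assms by auto
    ultimately show "\<exists>y. DERIV f x :> y \<and> y > 0" by (intro exI[of _ "ln m - ln x - ln (1 - m) + ln (1 - x)"]) auto
  qed
  then show ?thesis using eq[of a] eq[of b] assms by auto
qed

lemma lnG:
  assumes "0 < x" "x < 1" "0 < m" "m < 1"
  shows "ln (G x m) = x * ln (m / x) + (1 - x) * ln ((1 - m) / (1 - x))"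
  using assms by (simp add: G_def ln_mult ln_powr)

lemma binom_mode:
  fixes L k :: nat
  assumes "0 < k" "k < L"
  shows "real (L choose k) * (k / L) ^ k * (1 - k / L) ^ (L - k) \<ge> 1 / (L + 1)"
proof -
  define p :: real where "p = k / L"
  have p: "0 < p" "p < 1" using assms by (auto simp: p_def)
  define t where "t j = real (L choose j) * p ^ j * (1 - p) ^ (L - j)" for j
  have rec: "t (Suc j) * (Suc j) * (1 - p) = t j * (L - j) * p" if "j < L" for j
  proof -
    have "real (L choose Suc j) * Suc j = real (L choose j) * (L - j)"
      using binomial_absorb_comp[of L j] that
      by (metis (no_types, lifting) Suc_times_binomial_eq binomial_absorb_comp binomial_absorption mult.commute of_nat_diff less_imp_le_nat of_nat_mult)
    moreover have "(1 - p) ^ (L - j) = (1 - p) ^ (L - Suc j) * (1 - p)"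
      using that by (metis Suc_diff_Suc power_Suc2)
    ultimately show ?thesis unfolding t_def
      by (smt (verit) mult.commute mult.left_commute power_Suc)
  qed
  have tnn: "t j \<ge> 0" for j using p by (auto simp: t_def)
  have up: "t j \<le> t k" if "j \<le> k" for j
    using that
  proof (induction "k - j" arbitrary: j)
    case 0 then show ?case by auto
  next
    case (Suc d)
    then have jk: "j < k" by auto
    then have "t j \<le> t (Suc j)"
    proof -
      have "(Suc j) * (1 - p) \<le> (L - j) * p"
      proof -
        have "real k = L * p" using assms by (simp add: p_def)
        moreover have "real (Suc j) \<le> k" using jk by simp
        ultimately show ?thesis using jk assms p by (simp add: of_nat_diff algebra_simps)
      qed
      then have "t (Suc j) * (Suc j) * (1 - p) \<le> t (Suc j) * ((L - j) * p)"
        using tnn[of "Suc j"] by (metis mult.assoc mult_left_mono)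
      hence "t j * ((L - j) * p) \<le> t (Suc j) * ((L - j) * p)"
        using rec[of j] jk assms by (simp add: mult.assoc)
      moreover have "real (L - j) * p > 0" using jk assms p by simp
      ultimately show ?thesis by (meson mult_le_cancel_right_pos)
    qed
    also have "\<dots> \<le> t k" using Suc by (metis Suc_diff_Suc diff_Suc_1 jk Suc_leI)
    finally show ?case .
  qed
  have down: "t j \<le> t k" if "k \<le> j" "j \<le> L" for j
    using that
  proof (induction j rule: dec_induct)
    case base then show ?case by simp
  next
    case (step j)
    have "(L - j) * p \<le> (Suc j) * (1 - p)"
    proof -
      have "real k = L * p" using assms by (simp add: p_def)
      then show ?thesis using step p by (simp add: of_nat_diff algebra_simps)
    qed
    then have "t j * ((L - j) * p) \<le> t j * ((Suc j) * (1 - p))"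
      using tnn[of j] by (rule mult_left_mono)
    hence "t (Suc j) * ((Suc j) * (1 - p)) \<le> t j * ((Suc j) * (1 - p))"
      using rec[of j] step by (simp add: mult.assoc)
    moreover have "(Suc j) * (1 - p) > 0" using p by simp
    ultimately have "t (Suc j) \<le> t j" by (meson mult_le_cancel_right_pos)
    then show ?case using step by simp
  qed
  have sum1: "(\<Sum>j\<le>L. t j) = 1"
    using binomial_ring[of p "1 - p" L] by (simp add: t_def atLeast0AtMost mult_ac)
  have "(\<Sum>j\<le>L. t j) \<le> (\<Sum>j\<le>L. t k)"
    by (intro sum_mono) (metis atMost_iff down nat_le_linear up)
  then have "1 \<le> (L + 1) * t k" using sum1 by simp
  then show ?thesis unfolding t_def p_def by (simp add: field_simps)
qed

lemma lnn_top: "filterlim (\<lambda>n::nat. ln (real n)) at_top sequentially"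
  by real_asymp

lemma ev_ln_mult: "eventually (\<lambda>n. a n / ln (real n) * ln (real n) = (a n :: real)) sequentially"
proof -
  have "eventually (\<lambda>n::nat. n > 1) sequentially" by (rule eventually_gt_at_top)
  then show ?thesis
  proof (rule eventually_mono)
    fix n :: nat assume "n > 1"
    then have "ln (real n) > 0" by simp
    then show "a n / ln (real n) * ln (real n) = a n" by simp
  qed
qed

lemma ratio_top:
  assumes "(\<lambda>n. a n / ln (real n)) \<longlonglongrightarrow> c" "c > 0"
  shows "filterlim a at_top sequentially"
proof -
  have 1: "filterlim (\<lambda>n. a n / ln (real n) * ln (real n)) at_top sequentially"
    by (rule filterlim_tendsto_pos_mult_at_top[OF assms(1) assms(2) lnn_top])
  show ?thesis by (rule filterlim_cong[OF refl refl ev_ln_mult, THEN iffD1, OF 1])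
qed
lemma ratio_bot:
  assumes "(\<lambda>n. a n / ln (real n)) \<longlonglongrightarrow> c" "c < 0"
  shows "filterlim a at_bot sequentially"
proof -
  have 1: "filterlim (\<lambda>n. a n / ln (real n) * ln (real n)) at_bot sequentially"
    by (rule filterlim_tendsto_neg_mult_at_bot[OF assms(1) assms(2) lnn_top])
  show ?thesis by (rule filterlim_cong[OF refl refl ev_ln_mult, THEN iffD1, OF 1])
qed

lemma ln_one_minus_ge: "0 \<le> (x::real) \<Longrightarrow> x < 1 \<Longrightarrow> ln (1 - x) \<ge> - x / (1 - x)"
proof -
  assume x: "0 \<le> x" "x < 1"
  have "ln (1 / (1 - x)) \<le> 1 / (1 - x) - 1" using x by (intro ln_le_minus_one) simp
  moreover have "ln (1 / (1 - x)) = - ln (1 - x)" using x by (simp add: ln_div)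
  moreover have "1 / (1 - x) - 1 = x / (1 - x)" using x by (simp add: field_simps)
  ultimately show ?thesis by simp
qed

lemma div_mult_div_cancel_real: "(b::real) \<noteq> 0 \<Longrightarrow> a / b * (b / c) = a / c"
  by simp

lemma lnL_ratio:
  fixes L :: "nat \<Rightarrow> nat"
  assumes "(\<lambda>n. real (L n) / ln (real n)) \<longlonglongrightarrow> \<rho>" "\<rho> > 0"
  shows "(\<lambda>n. ln (real (L n) + 1) / ln (real n)) \<longlonglongrightarrow> 0"
proof -
  have Ltop: "filterlim (\<lambda>n. real (L n) + 1) at_top sequentially"
    using filterlim_tendsto_add_at_top[OF tendsto_const[of 1] ratio_top[OF assms]] by (simp add: add.commute)
  have "((\<lambda>x::real. ln x / x) \<longlongrightarrow> 0) at_top" by real_asymp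
  then have 1: "(\<lambda>n. ln (real (L n) + 1) / (real (L n) + 1)) \<longlonglongrightarrow> 0"
    using Ltop by (rule filterlim_compose)
  have "(\<lambda>n. 1 / ln (real n)) \<longlonglongrightarrow> 0"
    using lnn_top by (intro tendsto_divide_0[OF tendsto_const]) (rule filterlim_at_top_imp_at_infinity)
  then have "(\<lambda>n. real (L n) / ln (real n) + 1 / ln (real n)) \<longlonglongrightarrow> \<rho> + 0"
    using assms(1) by (intro tendsto_add)
  then have 2: "(\<lambda>n. (real (L n) + 1) / ln (real n)) \<longlonglongrightarrow> \<rho> + 0"
    unfolding add_divide_distrib .
  have 3: "(\<lambda>n. ln (real (L n) + 1) / (real (L n) + 1) * ((real (L n) + 1) / ln (real n))) \<longlonglongrightarrow> 0 * (\<rho> + 0)"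
    by (intro tendsto_mult 1 2)
  have eq: "ln (real (L n) + 1) / (real (L n) + 1) * ((real (L n) + 1) / ln (real n)) = ln (real (L n) + 1) / ln (real n)" for n
    by (rule div_mult_div_cancel_real) linarith
  show ?thesis using 3 unfolding eq by simp
qed

lemma exp_nat_ln: "0 < y \<Longrightarrow> exp (real j * ln y) = y ^ j"
  by (simp add: exp_of_nat_mult)

lemma binom_term_nonneg:
  fixes m1 g0 g1 :: real
  assumes "0 < m1" "m1 < 1" "0 < g0" "g0 < 1" "0 < g1" "g1 < 1"
  shows "0 \<le> real (L choose k) * m1^k * (1-m1)^(L - k) * (1 - g1^k * g0^(L - k))^(n-1)"
proof -
  have "g1^k * g0^(L-k) \<le> 1 * 1"
    using assms by (intro mult_mono power_le_one) auto
  then show ?thesis using assms by (intro mult_nonneg_nonneg zero_le_power) auto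
qed

lemma tendsto_ev:
  assumes "(f \<longlongrightarrow> l) F" "eventually (\<lambda>x. f x = g x) F" "l = l'"
  shows "(g \<longlongrightarrow> l') F"
  using assms tendsto_cong by metis

lemma asym_inf:
  fixes m1 g0 g1 \<rho> \<nu> :: real and L :: "nat \<Rightarrow> nat"
  assumes m1: "0 < m1" "m1 < 1" and g: "0 < g0" "g0 < g1" "g1 < 1" and rho: "0 < \<rho>"
    and nu: "0 < \<nu>" "\<nu> < m1" "1 + \<rho> * ln (G \<nu> m1) = 0"
    and Lrat: "(\<lambda>n. real (L n) / ln (real n)) \<longlonglongrightarrow> \<rho>"
    and h: "1 + \<rho> * (\<nu> * ln g1 + (1 - \<nu>) * ln g0) < 0"
  shows "filterlim (\<lambda>n. real n * (\<Sum>k\<le>L n. real (L n choose k) * m1^k * (1-m1)^(L n - k)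
            * (1 - g1^k * g0^(L n - k))^(n-1))) at_top sequentially"
proof -
  define m0 where "m0 = 1 - m1"
  have m0: "0 < m0" "m0 < 1" using m1 by (auto simp: m0_def)
  define D where "D = ln g1 - ln g0"
  have D: "D > 0" using g by (simp add: D_def)
  define hh where "hh x = 1 + \<rho> * (x * ln g1 + (1 - x) * ln g0)" for x
  have hh_lin: "hh (x + d) = hh x + \<rho> * d * D" for x d unfolding hh_def D_def by (simp add: algebra_simps)
  have hnu: "hh \<nu> < 0" using h by (simp add: hh_def)
  define \<delta> where "\<delta> = min ((m1 - \<nu>)/2) (- hh \<nu> / (2 * \<rho> * D))"
  have \<delta>: "\<delta> > 0" "\<delta> \<le> (m1 - \<nu>)/2" "\<delta> \<le> - hh \<nu> / (2*\<rho>*D)"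
  proof -
    have "0 < - hh \<nu> / (2 * \<rho> * D)" using hnu rho D by (intro divide_pos_pos) auto
    then show "\<delta> > 0" using nu unfolding \<delta>_def by auto
    show "\<delta> \<le> (m1 - \<nu>)/2" unfolding \<delta>_def by (rule min.cobounded1)
    show "\<delta> \<le> - hh \<nu> / (2*\<rho>*D)" unfolding \<delta>_def by (rule min.cobounded2)
  qed
  define \<nu>' where "\<nu>' = \<nu> + \<delta>"
  have nu': "\<nu> < \<nu>'" "\<nu>' < m1" "0 < \<nu>'" "\<nu>' < 1" using \<delta> nu m1 by (auto simp: \<nu>'_def)
  have "\<rho> * \<delta> * D \<le> \<rho> * D * (- hh \<nu> / (2*\<rho>*D))"
    using mult_left_mono[OF \<delta>(3), of "\<rho>*D"] rho D by (simp add: mult_ac)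
  also have "\<dots> = - hh \<nu> / 2" using rho D by (simp add: field_simps)
  finally have hnu': "hh \<nu>' < 0" using hh_lin[of \<nu> \<delta>] hnu by (simp add: \<nu>'_def)
  define c1 where "c1 = 1 + \<rho> * (\<nu>' * (ln m1 - ln \<nu>') + (1 - \<nu>') * (ln m0 - ln (1 - \<nu>')))"
  have c1: "c1 > 0"
  proof -
    have lt: "\<nu> * ln (m1 / \<nu>) + (1 - \<nu>) * ln ((1 - m1) / (1 - \<nu>)) < \<nu>' * ln (m1 / \<nu>') + (1 - \<nu>') * ln ((1 - m1) / (1 - \<nu>'))"
      using phi_mono[of \<nu> \<nu>' m1] nu nu' m1 by auto
    note mult_strict_left_mono[OF lt rho]
    moreover have "ln (G \<nu> m1) = \<nu> * ln (m1 / \<nu>) + (1 - \<nu>) * ln ((1 - m1) / (1 - \<nu>))"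
      using lnG[of \<nu> m1] nu m1 by auto
    moreover have "\<nu>' * ln (m1 / \<nu>') + (1 - \<nu>') * ln ((1 - m1) / (1 - \<nu>')) = \<nu>' * (ln m1 - ln \<nu>') + (1 - \<nu>') * (ln m0 - ln (1 - \<nu>'))"
      using nu' m1 m0 by (simp add: ln_div m0_def)
    ultimately have "\<rho> * ln (G \<nu> m1) < \<rho> * (\<nu>' * (ln m1 - ln \<nu>') + (1 - \<nu>') * (ln m0 - ln (1 - \<nu>')))"
      by simp
    then show ?thesis using nu(3) unfolding c1_def by linarith
  qed
  define k where "k n = nat \<lceil>\<nu>' * real (L n)\<rceil>" for n
  have kb: "\<nu>' * L n \<le> k n" "k n \<le> \<nu>' * L n + 1" for n
  proof -
    have "real (k n) = of_int \<lceil>\<nu>' * real (L n)\<rceil>" using nu' by (simp add: k_def)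
    then show "\<nu>' * L n \<le> k n" "k n \<le> \<nu>' * L n + 1"
      by (simp_all add: le_of_int_ceiling of_int_ceiling_le_add_one)
  qed
  have Ltop: "filterlim (\<lambda>n. real (L n)) at_top sequentially" by (rule ratio_top[OF Lrat rho])
  have lntop: "filterlim (\<lambda>n. ln (real n)) at_top sequentially" by (rule lnn_top)
  have ev_L: "eventually (\<lambda>n. 2 / (1 - \<nu>') \<le> real (L n)) sequentially"
    using Ltop unfolding filterlim_at_top by blast
  have ev_kL: "eventually (\<lambda>n. 0 < k n \<and> k n < L n \<and> 2 \<le> n) sequentially"
    using ev_L eventually_ge_at_top[of "2::nat"]
  proof eventually_elim
    case (elim n)
    have "2 \<le> (1 - \<nu>') * L n" using elim nu' by (simp add: field_simps)
    then have Lp: "0 < real (L n)" by (cases "L n = 0") auto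
    have "0 < \<nu>' * L n" using Lp nu' by simp
    then have "0 < k n" using kb[of n] by linarith
    moreover have "real (k n) < L n" using kb[of n] \<open>2 \<le> (1 - \<nu>') * L n\<close> by (simp add: algebra_simps)
    ultimately show ?case using elim by simp
  qed
  have inv_ln: "(\<lambda>n. 1 / ln (real n)) \<longlonglongrightarrow> 0"
    using lntop by (intro tendsto_divide_0[OF tendsto_const]) (rule filterlim_at_top_imp_at_infinity)
  have k_rat: "(\<lambda>n. real (k n) / ln (real n)) \<longlonglongrightarrow> \<nu>' * \<rho>"
  proof -
    have a: "(\<lambda>n. \<nu>' * (real (L n) / ln (real n))) \<longlonglongrightarrow> \<nu>' * \<rho>" by (intro tendsto_intros Lrat)
    have b: "(\<lambda>n. (real (k n) - \<nu>' * real (L n)) / ln (real n)) \<longlonglongrightarrow> 0"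
    proof (rule tendsto_sandwich[OF _ _ tendsto_const inv_ln])
      show "eventually (\<lambda>n. 0 \<le> (real (k n) - \<nu>' * real (L n)) / ln (real n)) sequentially"
        using eventually_ge_at_top[of "2::nat"] by eventually_elim (use kb in auto)
      show "eventually (\<lambda>n. (real (k n) - \<nu>' * real (L n)) / ln (real n) \<le> 1 / ln (real n)) sequentially"
        using eventually_ge_at_top[of "2::nat"]
      proof eventually_elim
        case (elim n)
        have "real (k n) - \<nu>' * L n \<le> 1" using kb(2)[of n] by linarith
        then show ?case using elim by (intro divide_right_mono) auto
      qed
    qed
    have "(\<lambda>n. \<nu>' * (real (L n) / ln (real n)) + (real (k n) - \<nu>' * real (L n)) / ln (real n)) \<longlonglongrightarrow> \<nu>' * \<rho> + 0"
      by (intro tendsto_add a b)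
    moreover have "\<nu>' * (real (L n) / ln (real n)) + (real (k n) - \<nu>' * real (L n)) / ln (real n) = real (k n) / ln (real n)" for n
      by (simp add: diff_divide_distrib)
    ultimately show ?thesis by simp
  qed
  have Lk_rat: "(\<lambda>n. real (L n - k n) / ln (real n)) \<longlonglongrightarrow> (1 - \<nu>') * \<rho>"
  proof -
    have "(\<lambda>n. real (L n) / ln (real n) - real (k n) / ln (real n)) \<longlonglongrightarrow> \<rho> - \<nu>' * \<rho>"
      by (intro tendsto_diff Lrat k_rat)
    moreover have "eventually (\<lambda>n. real (L n) / ln (real n) - real (k n) / ln (real n) = real (L n - k n) / ln (real n)) sequentially"
      using ev_kL by eventually_elim (auto simp: of_nat_diff diff_divide_distrib)
    moreover have "\<rho> - \<nu>' * \<rho> = (1 - \<nu>') * \<rho>" by (simp add: algebra_simps)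
    ultimately show ?thesis by (rule tendsto_ev)
  qed
  have kL: "(\<lambda>n. real (k n) / real (L n)) \<longlonglongrightarrow> \<nu>'"
  proof -
    have "(\<lambda>n. (real (k n) / ln (real n)) / (real (L n) / ln (real n))) \<longlonglongrightarrow> (\<nu>' * \<rho>) / \<rho>"
      using rho by (intro tendsto_divide k_rat Lrat) auto
    moreover have "eventually (\<lambda>n. (real (k n) / ln (real n)) / (real (L n) / ln (real n)) = real (k n) / real (L n)) sequentially"
      using eventually_ge_at_top[of "2::nat"] by eventually_elim auto
    moreover have "(\<nu>' * \<rho>) / \<rho> = \<nu>'" using rho by simp
    ultimately show ?thesis by (rule tendsto_ev)
  qed
  define e where "e n = ln (real n) + real (k n) * ln g1 + real (L n - k n) * ln g0" for n
  have e_rat: "(\<lambda>n. e n / ln (real n)) \<longlonglongrightarrow> hh \<nu>'"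
  proof -
    have "(\<lambda>n. 1 + real (k n) / ln (real n) * ln g1 + real (L n - k n) / ln (real n) * ln g0) \<longlonglongrightarrow> 1 + \<nu>' * \<rho> * ln g1 + (1 - \<nu>') * \<rho> * ln g0"
      by (intro tendsto_intros k_rat Lk_rat)
    moreover have "eventually (\<lambda>n. 1 + real (k n) / ln (real n) * ln g1 + real (L n - k n) / ln (real n) * ln g0 = e n / ln (real n)) sequentially"
      using eventually_ge_at_top[of "2::nat"] by eventually_elim (auto simp: e_def add_divide_distrib)
    moreover have "1 + \<nu>' * \<rho> * ln g1 + (1 - \<nu>') * \<rho> * ln g0 = hh \<nu>'" by (simp add: hh_def algebra_simps)
    ultimately show ?thesis by (rule tendsto_ev)
  qed
  have np0: "(\<lambda>n. exp (e n)) \<longlonglongrightarrow> 0"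
    using filterlim_compose[OF exp_at_bot ratio_bot[OF e_rat hnu']] .
  define LB where "LB n = ln (real n) - ln (real (L n) + 1) + real (k n) * (ln m1 - ln (real (k n) / real (L n)))
     + real (L n - k n) * (ln m0 - ln (1 - real (k n) / real (L n))) - 1" for n
  have LB_rat: "(\<lambda>n. LB n / ln (real n)) \<longlonglongrightarrow> c1"
  proof -
    have "(\<lambda>n. 1 - ln (real (L n) + 1) / ln (real n) + real (k n) / ln (real n) * (ln m1 - ln (real (k n) / real (L n)))
       + real (L n - k n) / ln (real n) * (ln m0 - ln (1 - real (k n) / real (L n))) - 1 / ln (real n))
       \<longlonglongrightarrow> 1 - 0 + \<nu>' * \<rho> * (ln m1 - ln \<nu>') + (1 - \<nu>') * \<rho> * (ln m0 - ln (1 - \<nu>')) - 0"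
      using nu' by (intro tendsto_intros lnL_ratio[OF Lrat rho] k_rat Lk_rat kL inv_ln) auto
    moreover have "eventually (\<lambda>n. 1 - ln (real (L n) + 1) / ln (real n) + real (k n) / ln (real n) * (ln m1 - ln (real (k n) / real (L n)))
       + real (L n - k n) / ln (real n) * (ln m0 - ln (1 - real (k n) / real (L n))) - 1 / ln (real n) = LB n / ln (real n)) sequentially"
      using eventually_ge_at_top[of "2::nat"] by eventually_elim (auto simp: LB_def add_divide_distrib diff_divide_distrib)
    moreover have "1 - 0 + \<nu>' * \<rho> * (ln m1 - ln \<nu>') + (1 - \<nu>') * \<rho> * (ln m0 - ln (1 - \<nu>')) - 0 = c1"
      by (simp add: c1_def algebra_simps)
    ultimately show ?thesis by (rule tendsto_ev)
  qed
  have LBtop: "filterlim (\<lambda>n. exp (LB n)) at_top sequentially"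
    using filterlim_compose[OF exp_at_top ratio_top[OF LB_rat c1]] .
  show ?thesis
  proof (rule filterlim_at_top_mono[OF LBtop])
    have ev_np: "eventually (\<lambda>n. exp (e n) \<le> 1/4) sequentially"
      using order_tendstoD(2)[OF np0, of "1/4"] by (auto elim: eventually_mono)
    show "eventually (\<lambda>n. exp (LB n) \<le> real n * (\<Sum>k\<le>L n. real (L n choose k) * m1^k * (1-m1)^(L n - k)
            * (1 - g1^k * g0^(L n - k))^(n-1))) sequentially"
      using ev_kL ev_np
    proof eventually_elim
      case (elim n)
      define LL where "LL = L n"
      define kk where "kk = k n"
      define p where "p = g1^kk * g0^(LL-kk)"
      define r where "r = real kk / real LL"
      have kk: "0 < kk" "kk < LL" "2 \<le> n" using elim by (auto simp: LL_def kk_def)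
      have r: "0 < r" "r < 1" using kk by (auto simp: r_def)
      have eg0: "exp (real (LL - kk) * ln g0) = g0^(LL-kk)" by (rule exp_nat_ln) (use g in auto)
      have eg1: "exp (real kk * ln g1) = g1^kk" by (rule exp_nat_ln) (use g in auto)
      have en: "exp (ln (real n)) = real n" using kk by simp
      have np: "real n * p = exp (e n)"
        unfolding e_def exp_add LL_def[symmetric] kk_def[symmetric] eg0 eg1 en p_def by (simp add: mult.assoc)
      have p0: "0 \<le> p" using g by (simp add: p_def)
      have pn: "p \<le> 1/4"
      proof -
        have "p \<le> real n * p" using p0 kk by (simp add: mult_le_cancel_right1)
        then show ?thesis using np elim by simp
      qed
      have C: "real (LL choose kk) * r ^ kk * (1 - r) ^ (LL - kk) \<ge> 1 / (LL + 1)"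
        using binom_mode[of kk LL] kk by (simp add: r_def)
      have pow: "(1 - p) ^ (n - 1) \<ge> exp (-1)"
      proof -
        have "ln ((1 - p) ^ (n - 1)) = real (n - 1) * ln (1 - p)" using pn by (simp add: ln_realpow)
        also have "\<dots> \<ge> real (n - 1) * (- p / (1 - p))"
          using ln_one_minus_ge[of p] p0 pn by (intro mult_left_mono) auto
        finally have 1: "ln ((1 - p) ^ (n - 1)) \<ge> - (real (n - 1) * p / (1 - p))" by simp
        have "real (n - 1) * p / (1 - p) \<le> real n * p / (3/4)"
          using p0 pn kk by (intro frac_le mult_right_mono) auto
        also have "\<dots> \<le> 1" using np elim by simp
        finally have "ln ((1 - p) ^ (n - 1)) \<ge> -1" using 1 by simp
        then have "exp (-1) \<le> exp (ln ((1 - p) ^ (n - 1)))" by simp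
        also have "\<dots> = (1 - p) ^ (n - 1)" using pn by simp
        finally show ?thesis .
      qed
      have expLB: "exp (LB n) = real n / (real LL + 1) * (m1 / r) ^ kk * (m0 / (1 - r)) ^ (LL - kk) * exp (-1)"
      proof -
        have "LB n = ln (real n) - ln (real LL + 1) + real kk * (ln m1 - ln r) + real (LL - kk) * (ln m0 - ln (1 - r)) - 1"
          unfolding LB_def LL_def kk_def r_def ..
        also have "\<dots> = ln (real n) - ln (real LL + 1) + real kk * ln (m1 / r) + real (LL - kk) * ln (m0 / (1 - r)) + (-1)"
          using r m1 m0 by (simp add: ln_div del: of_nat_diff)
        finally have LBe: "LB n = ln (real n) - ln (real LL + 1) + real kk * ln (m1 / r) + real (LL - kk) * ln (m0 / (1 - r)) + (-1)" .
        have e1: "exp (real kk * ln (m1 / r)) = (m1 / r) ^ kk" by (rule exp_nat_ln) (use r m1 in auto)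
        have e2: "exp (real (LL - kk) * ln (m0 / (1 - r))) = (m0 / (1 - r)) ^ (LL - kk)" by (rule exp_nat_ln) (use r m0 in auto)
        have e3: "exp (ln (real n) - ln (real LL + 1)) = real n / (real LL + 1)"
          using kk by (simp add: exp_diff)
        show ?thesis unfolding LBe exp_add e1 e2 e3 ..
      qed
      have Q: "0 < r ^ kk * (1 - r) ^ (LL - kk)" using r by simp
      have "1 / (real LL + 1) \<le> real (LL choose kk) * (r ^ kk * (1 - r) ^ (LL - kk))"
        using C by (simp add: mult.assoc add.commute)
      then have XC: "1 / (real LL + 1) / (r ^ kk * (1 - r) ^ (LL - kk)) \<le> real (LL choose kk)"
        by (subst pos_divide_le_eq[OF Q])
      have "exp (LB n) = real n * ((1 / (real LL + 1)) / (r ^ kk * (1 - r) ^ (LL - kk))) * (m1 ^ kk * m0 ^ (LL - kk)) * exp (-1)"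
        unfolding expLB using r by (simp add: power_divide field_simps)
      also have "\<dots> \<le> real n * real (LL choose kk) * (m1 ^ kk * m0 ^ (LL - kk)) * (1 - p) ^ (n - 1)"
        by (intro mult_mono pow XC order.refl) (use m1 m0 r pn in auto)
      also have "\<dots> = real n * (real (LL choose kk) * m1 ^ kk * (1 - m1) ^ (LL - kk) * (1 - g1 ^ kk * g0 ^ (LL - kk)) ^ (n - 1))"
        by (simp add: p_def m0_def mult_ac)
      also have "\<dots> \<le> real n * (\<Sum>j\<le>LL. real (LL choose j) * m1^j * (1-m1)^(LL - j) * (1 - g1^j * g0^(LL - j))^(n-1))"
        using kk by (intro mult_left_mono member_le_sum binom_term_nonneg) (use m1 g in auto)
      finally show ?case by (simp add: LL_def)
    qed
  qed
qed

lemma powr_ge1: "0 < (t::real) \<Longrightarrow> t < 1 \<Longrightarrow> x \<le> 0 \<Longrightarrow> 1 \<le> t powr x"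
  by (simp add: powr_def mult_nonpos_nonpos)

lemma asym_zero:
  fixes m1 g0 g1 \<rho> \<nu> :: real and L :: "nat \<Rightarrow> nat"
  assumes m1: "0 < m1" "m1 < 1" and g: "0 < g0" "g0 < g1" "g1 < 1" and rho: "0 < \<rho>"
    and nu: "0 < \<nu>" "\<nu> < m1" "1 + \<rho> * ln (G \<nu> m1) = 0"
    and Lrat: "(\<lambda>n. real (L n) / ln (real n)) \<longlonglongrightarrow> \<rho>"
    and h: "1 + \<rho> * (\<nu> * ln g1 + (1 - \<nu>) * ln g0) > 0"
  shows "(\<lambda>n. real n * (\<Sum>k\<le>L n. real (L n choose k) * m1^k * (1-m1)^(L n - k)
            * (1 - g1^k * g0^(L n - k))^(n-1))) \<longlonglongrightarrow> 0"
proof -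
  define m0 where "m0 = 1 - m1"
  have m0: "0 < m0" "m0 < 1" using m1 by (auto simp: m0_def)
  define D where "D = ln g1 - ln g0"
  have D: "D > 0" using g by (simp add: D_def)
  define hh where "hh x = 1 + \<rho> * (x * ln g1 + (1 - x) * ln g0)" for x
  have hh_lin: "hh (x - d) = hh x - \<rho> * d * D" for x d unfolding hh_def D_def by (simp add: algebra_simps)
  have hnu: "hh \<nu> > 0" using h by (simp add: hh_def)
  define \<delta> where "\<delta> = min (\<nu>/2) (hh \<nu> / (2 * \<rho> * D))"
  have \<delta>: "\<delta> > 0" "\<delta> \<le> \<nu>/2" "\<delta> \<le> hh \<nu> / (2*\<rho>*D)"
  proof -
    have "0 < hh \<nu> / (2 * \<rho> * D)" using hnu rho D by (intro divide_pos_pos) auto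
    then show "\<delta> > 0" using nu unfolding \<delta>_def by auto
    show "\<delta> \<le> \<nu>/2" unfolding \<delta>_def by (rule min.cobounded1)
    show "\<delta> \<le> hh \<nu> / (2*\<rho>*D)" unfolding \<delta>_def by (rule min.cobounded2)
  qed
  define \<nu>' where "\<nu>' = \<nu> - \<delta>"
  have nu': "\<nu>' < \<nu>" "0 < \<nu>'" "\<nu>' < m1" "\<nu>' < 1" using \<delta> nu m1 by (auto simp: \<nu>'_def)
  have "\<rho> * \<delta> * D \<le> \<rho> * D * (hh \<nu> / (2*\<rho>*D))"
    using mult_left_mono[OF \<delta>(3), of "\<rho>*D"] rho D by (simp add: mult_ac)
  also have "\<dots> = hh \<nu> / 2" using rho D by (simp add: field_simps)
  finally have hnu': "hh \<nu>' > 0" using hh_lin[of \<nu> \<delta>] hnu by (simp add: \<nu>'_def)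
  define B where "B = \<nu>' * (ln m1 - ln \<nu>') + (1 - \<nu>') * (ln m0 - ln (1 - \<nu>'))"
  have cB: "1 + \<rho> * B < 0"
  proof -
    have lt: "\<nu>' * ln (m1 / \<nu>') + (1 - \<nu>') * ln ((1 - m1) / (1 - \<nu>')) < \<nu> * ln (m1 / \<nu>) + (1 - \<nu>) * ln ((1 - m1) / (1 - \<nu>))"
      using phi_mono[of \<nu>' \<nu> m1] nu nu' m1 by auto
    note mult_strict_left_mono[OF lt rho]
    moreover have "ln (G \<nu> m1) = \<nu> * ln (m1 / \<nu>) + (1 - \<nu>) * ln ((1 - m1) / (1 - \<nu>))"
      using lnG[of \<nu> m1] nu m1 by auto
    moreover have "\<nu>' * ln (m1 / \<nu>') + (1 - \<nu>') * ln ((1 - m1) / (1 - \<nu>')) = B"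
      using nu' m1 m0 by (simp add: ln_div m0_def B_def)
    ultimately have "\<rho> * B < \<rho> * ln (G \<nu> m1)" by simp
    then show ?thesis using nu(3) by linarith
  qed
  define \<theta> where "\<theta> = \<nu>' * m0 / ((1 - \<nu>') * m1)"
  have th: "0 < \<theta>" "\<theta> < 1"
  proof -
    show "0 < \<theta>" using nu' m0 m1 by (simp add: \<theta>_def)
    have "\<nu>' * m0 < (1 - \<nu>') * m1" using nu' m1 by (simp add: m0_def algebra_simps)
    then show "\<theta> < 1" using nu' m1 by (simp add: \<theta>_def)
  qed
  have thmm: "\<theta> * m1 + m0 = m0 / (1 - \<nu>')" using nu' m1 by (simp add: \<theta>_def field_simps)
  have Beq: "B = - \<nu>' * ln \<theta> + ln (\<theta> * m1 + m0)"
  proof -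
    have l1: "ln (\<theta> * m1 + m0) = ln m0 - ln (1 - \<nu>')" using nu' m0 by (simp add: thmm ln_div)
    have l2: "ln \<theta> = ln \<nu>' + ln m0 - ln (1 - \<nu>') - ln m1"
      using nu' m0 m1 by (simp add: \<theta>_def ln_div ln_mult)
    show ?thesis unfolding l1 l2 B_def by (simp add: algebra_simps)
  qed
  define w where "w = \<nu>' * ln g1 + (1 - \<nu>') * ln g0"
  have Ltop: "filterlim (\<lambda>n. real (L n)) at_top sequentially" by (rule ratio_top[OF Lrat rho])
  have lntop: "filterlim (\<lambda>n. ln (real n)) at_top sequentially" by (rule lnn_top)
  have inv_ln: "(\<lambda>n. 1 / ln (real n)) \<longlonglongrightarrow> 0"
    using lntop by (intro tendsto_divide_0[OF tendsto_const]) (rule filterlim_at_top_imp_at_infinity)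
  define F1 where "F1 n = ln (real n) + real (L n) * B" for n
  have F1_rat: "(\<lambda>n. F1 n / ln (real n)) \<longlonglongrightarrow> 1 + \<rho> * B"
  proof -
    have "(\<lambda>n. 1 + real (L n) / ln (real n) * B) \<longlonglongrightarrow> 1 + \<rho> * B"
      by (intro tendsto_intros Lrat)
    moreover have "eventually (\<lambda>n. 1 + real (L n) / ln (real n) * B = F1 n / ln (real n)) sequentially"
      using eventually_ge_at_top[of "2::nat"] by eventually_elim (auto simp: F1_def add_divide_distrib)
    ultimately show ?thesis by (rule tendsto_ev) simp
  qed
  have T1: "(\<lambda>n. exp (F1 n)) \<longlonglongrightarrow> 0"
    using filterlim_compose[OF exp_at_bot ratio_bot[OF F1_rat cB]] .
  define y where "y n = ln (real n - 1) + real (L n) * w" for n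
  have y_rat: "(\<lambda>n. y n / ln (real n)) \<longlonglongrightarrow> hh \<nu>'"
  proof -
    have l1: "(\<lambda>n::nat. ln (real n - 1) / ln (real n)) \<longlonglongrightarrow> 1" by real_asymp
    have "(\<lambda>n. ln (real n - 1) / ln (real n) + real (L n) / ln (real n) * w) \<longlonglongrightarrow> 1 + \<rho> * w"
      by (intro tendsto_intros Lrat l1)
    moreover have "eventually (\<lambda>n. ln (real n - 1) / ln (real n) + real (L n) / ln (real n) * w = y n / ln (real n)) sequentially"
      using eventually_ge_at_top[of "2::nat"] by eventually_elim (auto simp: y_def add_divide_distrib)
    ultimately show ?thesis by (rule tendsto_ev) (simp add: hh_def w_def)
  qed
  define a where "a = hh \<nu>' / 2"
  have a: "a > 0" using hnu' by (simp add: a_def)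
  have ev_y: "eventually (\<lambda>n. a * ln (real n) \<le> y n) sequentially"
  proof -
    have "eventually (\<lambda>n. a < y n / ln (real n)) sequentially"
      by (rule order_tendstoD(1)[OF y_rat]) (use hnu' in \<open>simp add: a_def\<close>)
    then show ?thesis using eventually_ge_at_top[of "2::nat"]
    proof eventually_elim
      case (elim n)
      then have "ln (real n) > 0" by simp
      then show ?case using elim by (simp add: field_simps)
    qed
  qed
  have T2: "(\<lambda>n::nat. real n * exp (-(real n powr a))) \<longlonglongrightarrow> 0"
    using a by real_asymp
  define E where "E n = real n * (\<Sum>k\<le>L n. real (L n choose k) * m1^k * (1-m1)^(L n - k)
            * (1 - g1^k * g0^(L n - k))^(n-1))" for n
  have main: "eventually (\<lambda>n. E n \<le> exp (F1 n) + real n * exp (-(real n powr a))) sequentially"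
    using ev_y eventually_ge_at_top[of "2::nat"]
  proof eventually_elim
    case (elim n)
    define LL where "LL = L n"
    define \<pi> where "\<pi> = exp (real LL * w)"
    have pi0: "0 < \<pi>" by (simp add: \<pi>_def)
    have npi: "real n powr a \<le> (real n - 1) * \<pi>"
    proof -
      have "real n powr a = exp (a * ln (real n))" using elim by (simp add: powr_def)
      also have "\<dots> \<le> exp (y n)" using elim by simp
      also have "\<dots> = (real n - 1) * \<pi>" using elim by (simp add: y_def \<pi>_def exp_add LL_def)
      finally show ?thesis .
    qed
    have termb: "(1 - g1^k * g0^(LL - k))^(n-1) \<le> \<theta> powr (real k - \<nu>' * LL) + exp (-(real n powr a))"
      if k: "k \<le> LL" for k
    proof (cases "real k < \<nu>' * LL")
      case True
      have "(1 - g1^k * g0^(LL - k))^(n-1) \<le> 1"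
      proof (rule power_le_one)
        have "g1^k * g0^(LL-k) \<le> 1 * 1" using g by (intro mult_mono power_le_one) auto
        then show "0 \<le> 1 - g1^k * g0^(LL - k)" by simp
        show "1 - g1^k * g0^(LL - k) \<le> 1" using g by simp
      qed
      also have "\<dots> \<le> \<theta> powr (real k - \<nu>' * LL)" using True th by (intro powr_ge1) auto
      finally show ?thesis by (smt (verit) exp_gt_zero)
    next
      case False
      define p where "p = g1^k * g0^(LL - k)"
      have "g1^k * g0^(LL-k) \<le> 1 * 1" using g by (intro mult_mono power_le_one) auto
      then have p1: "p \<le> 1" by (simp add: p_def)
      have "p = exp (real k * ln g1 + real (LL - k) * ln g0)"
        using g by (simp add: p_def exp_add exp_nat_ln)
      also have "real k * ln g1 + real (LL - k) * ln g0 = real LL * ln g0 + real k * D"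
        using k by (simp add: D_def of_nat_diff algebra_simps)
      also have "real LL * ln g0 + real k * D \<ge> real LL * ln g0 + \<nu>' * LL * D"
        using False D by (intro add_left_mono mult_right_mono) auto
      then have "exp (real LL * ln g0 + real k * D) \<ge> \<pi>"
        by (simp add: \<pi>_def w_def D_def algebra_simps)
      finally have pp: "\<pi> \<le> p" .
      have "(1 - p)^(n-1) \<le> (1 - \<pi>)^(n-1)" using pp p1 by (intro power_mono) auto
      also have "\<dots> \<le> (exp (-\<pi>))^(n-1)"
        using pp p1 by (intro power_mono) (auto simp: exp_ge_add_one_self[of "-\<pi>", simplified])
      also have "\<dots> = exp (-(real (n-1) * \<pi>))" by (simp add: exp_of_nat_mult[symmetric])
      also have "\<dots> \<le> exp (-(real n powr a))" using npi elim by (simp add: of_nat_diff)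
      finally show ?thesis unfolding p_def by (smt (verit) powr_ge_zero)
    qed
    have bnn: "0 \<le> real (LL choose k) * m1^k * (1-m1)^(LL - k)" for k using m1 by simp
    have "E n = real n * (\<Sum>k\<le>LL. real (LL choose k) * m1^k * (1-m1)^(LL - k) * (1 - g1^k * g0^(LL - k))^(n-1))"
      by (simp add: E_def LL_def)
    also have "\<dots> \<le> real n * (\<Sum>k\<le>LL. real (LL choose k) * m1^k * (1-m1)^(LL - k) * (\<theta> powr (real k - \<nu>' * LL) + exp (-(real n powr a))))"
      by (intro mult_left_mono sum_mono mult_left_mono[OF termb bnn]) auto
    also have "(\<Sum>k\<le>LL. real (LL choose k) * m1^k * (1-m1)^(LL - k) * (\<theta> powr (real k - \<nu>' * LL) + exp (-(real n powr a))))
       = \<theta> powr (- \<nu>' * LL) * (\<Sum>k\<le>LL. real (LL choose k) * (\<theta> * m1)^k * m0^(LL - k)) + exp (-(real n powr a)) * (\<Sum>k\<le>LL. real (LL choose k) * m1^k * m0^(LL - k))"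
    proof -
      have tp: "\<theta> powr (real k - \<nu>' * LL) = \<theta> ^ k * \<theta> powr (-\<nu>' * LL)" for k
      proof -
        have "\<theta> powr (real k - \<nu>' * LL) = \<theta> powr (real k + (-\<nu>' * LL))" by simp
        also have "\<dots> = \<theta> powr (real k) * \<theta> powr (-\<nu>' * LL)" by (rule powr_add)
        finally show ?thesis using th by (simp add: powr_realpow)
      qed
      have "real (LL choose k) * m1^k * (1-m1)^(LL - k) * (\<theta> powr (real k - \<nu>' * LL) + exp (-(real n powr a)))
          = \<theta> powr (- \<nu>' * LL) * (real (LL choose k) * (\<theta> * m1)^k * m0^(LL - k)) + exp (-(real n powr a)) * (real (LL choose k) * m1^k * m0^(LL - k))" for k
        unfolding tp m0_def power_mult_distrib by (simp add: algebra_simps)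
      then show ?thesis by (simp add: sum.distrib sum_distrib_left)
    qed
    also have "(\<Sum>k\<le>LL. real (LL choose k) * (\<theta> * m1)^k * m0^(LL - k)) = (\<theta> * m1 + m0) ^ LL"
      by (simp add: binomial_ring atLeast0AtMost)
    also have "(\<Sum>k\<le>LL. real (LL choose k) * m1^k * m0^(LL - k)) = (m1 + m0) ^ LL"
      by (simp add: binomial_ring atLeast0AtMost)
    also have "(m1 + m0) ^ LL = 1" by (simp add: m0_def)
    also have "real n * (\<theta> powr (- \<nu>' * LL) * (\<theta> * m1 + m0) ^ LL + exp (- (real n powr a)) * 1)
        = exp (F1 n) + real n * exp (-(real n powr a))"
    proof -
      have "\<theta> * m1 + m0 > 0" using th m1 m0 by (intro add_pos_pos mult_pos_pos) auto
      then have "(\<theta> * m1 + m0) ^ LL = exp (real LL * ln (\<theta> * m1 + m0))" by (simp add: exp_nat_ln)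
      moreover have "\<theta> powr (- \<nu>' * LL) = exp (- \<nu>' * LL * ln \<theta>)" using th by (simp add: powr_def)
      moreover have "exp (F1 n) = real n * exp (real LL * B)" using elim by (simp add: F1_def exp_add LL_def)
      ultimately show ?thesis unfolding Beq by (simp add: exp_add[symmetric] algebra_simps)
    qed
    finally show ?case .
  qed
  have up: "(\<lambda>n. exp (F1 n) + real n * exp (-(real n powr a))) \<longlonglongrightarrow> 0"
    using tendsto_add[OF T1 T2] by simp
  have lo: "eventually (\<lambda>n. 0 \<le> E n) sequentially"
  proof (intro always_eventually allI)
    fix n
    have g': "g0 < 1" "0 < g1" using g by auto
    show "0 \<le> E n" unfolding E_def
      by (intro mult_nonneg_nonneg sum_nonneg binom_term_nonneg[OF m1(1) m1(2) g(1) g'(1) g'(2) g(3)]) auto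
  qed
  show ?thesis
    using tendsto_sandwich[OF lo main tendsto_const up] unfolding E_def .
qed

locale mag_model = prob_space M for M :: "'w measure" +
  fixes mu :: "nat \<Rightarrow> real" and q :: "nat \<Rightarrow> nat \<Rightarrow> real"
    and A :: "nat \<Rightarrow> nat \<Rightarrow> 'w \<Rightarrow> nat" and U :: "nat \<Rightarrow> nat \<Rightarrow> 'w \<Rightarrow> real"
  assumes mu: "0 < mu 0" "0 < mu 1" "mu 0 + mu 1 = 1"
    and q: "\<forall>a\<in>{0,1}. \<forall>b\<in>{0,1}. 0 < q a b \<and> q a b < 1"
    and indep: "indep_vars (\<lambda>_. borel) (mag_family A U) mag_index"
    and A_vals: "\<forall>l\<ge>1. \<forall>u\<ge>1. \<forall>\<omega>\<in>space M. A l u \<omega> \<in> {0, 1}"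
    and A_dist: "\<forall>l\<ge>1. \<forall>u\<ge>1. measure M {\<omega>\<in>space M. A l u \<omega> = 1} = mu 1"
    and U_dist: "\<forall>u v. 1 \<le> u \<and> u < v \<longrightarrow>
                   distr M borel (U u v) = uniform_measure lborel {0..1::real}"
begin

abbreviation "X \<equiv> mag_family A U"

lemma rvX: "i \<in> mag_index \<Longrightarrow> X i \<in> borel_measurable M"
  using indep unfolding indep_vars_def by auto

lemma rvA: "1 \<le> l \<Longrightarrow> 1 \<le> u \<Longrightarrow> (\<lambda>\<omega>. real (A l u \<omega>)) \<in> borel_measurable M"
  using rvX[of "Inl (l, u)"] by (simp add: mag_family_def mag_index_def)

lemma rvU: "1 \<le> u \<Longrightarrow> u < v \<Longrightarrow> U u v \<in> borel_measurable M"
  using rvX[of "Inr (u, v)"] by (simp add: mag_family_def mag_index_def)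

lemma evA: assumes "1 \<le> l" "1 \<le> u" shows "{\<omega>\<in>space M. A l u \<omega> = t} \<in> events"
proof -
  have "{\<omega>\<in>space M. A l u \<omega> = t} = (\<lambda>\<omega>. real (A l u \<omega>)) -` {real t} \<inter> space M" by auto
  also have "\<dots> \<in> events" by (rule measurable_sets[OF rvA[OF assms]]) simp
  finally show ?thesis .
qed

lemma evU: assumes "1 \<le> u" "u < v" shows "{\<omega>\<in>space M. U u v \<omega> \<le> c} \<in> events"
proof -
  have "{\<omega>\<in>space M. U u v \<omega> \<le> c} = U u v -` {..c} \<inter> space M" by auto
  also have "\<dots> \<in> events" by (rule measurable_sets[OF rvU[OF assms]]) simp
  finally show ?thesis .
qed

lemma probA: assumes "1 \<le> l" "1 \<le> u" "t \<in> {0,1}" shows "prob {\<omega>\<in>space M. A l u \<omega> = t} = mu t"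
proof (cases "t = 1")
  case True then show ?thesis using A_dist assms by auto
next
  case False
  then have t: "t = 0" using assms by auto
  have "{\<omega>\<in>space M. A l u \<omega> = 0} = space M - {\<omega>\<in>space M. A l u \<omega> = 1}"
    using A_vals assms by fastforce
  then have "prob {\<omega>\<in>space M. A l u \<omega> = 0} = 1 - prob {\<omega>\<in>space M. A l u \<omega> = 1}"
    using prob_compl[OF evA[OF assms(1,2), of 1]] by simp
  then show ?thesis using A_dist assms mu t by auto
qed

lemma probU: assumes "1 \<le> u" "u < v" "0 \<le> c" "c \<le> 1" shows "prob {\<omega>\<in>space M. U u v \<omega> \<le> c} = c"
proof -
  have "prob {\<omega>\<in>space M. U u v \<omega> \<le> c} = prob (U u v -` {..c} \<inter> space M)"
    by (rule arg_cong[where f=prob]) auto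
  also have "\<dots> = measure (distr M borel (U u v)) {..c}"
    by (rule measure_distr[symmetric]) (use rvU[OF assms(1,2)] in auto)
  also have "\<dots> = measure (uniform_measure lborel {0..1::real}) {..c}" using U_dist assms by simp
  also have "\<dots> = measure lborel ({0..1} \<inter> {..c}) / measure lborel {0..1::real}"
    by (rule measure_uniform_measure) auto
  also have "{0..1} \<inter> {..c} = {0..c}" using assms by auto
  finally show ?thesis using assms by simp
qed

lemma expect_ind:
  assumes "{\<omega>\<in>space M. P \<omega>} \<in> events"
  shows "(\<integral>\<omega>. (if P \<omega> then 1 else 0::real) \<partial>M) = prob {\<omega>\<in>space M. P \<omega>}"
proof -
  have "(\<integral>\<omega>. (if P \<omega> then 1 else 0::real) \<partial>M) = (\<integral>\<omega>. indicator {\<omega>\<in>space M. P \<omega>} \<omega> \<partial>M)"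
    by (intro Bochner_Integration.integral_cong) (auto simp: indicator_def)
  also have "\<dots> = prob {\<omega>\<in>space M. P \<omega>}" by (simp add: Int_absorb2 subsetI)
  finally show ?thesis .
qed

lemma indep_prod:
  fixes h :: "((nat \<times> nat) + (nat \<times> nat)) \<Rightarrow> real \<Rightarrow> real"
  assumes J: "finite J" "J \<subseteq> mag_index"
    and h: "\<And>i. i \<in> J \<Longrightarrow> h i \<in> borel_measurable borel" "\<And>i x. i \<in> J \<Longrightarrow> \<bar>h i x\<bar> \<le> 1"
  shows "(\<integral>\<omega>. (\<Prod>i\<in>J. h i (X i \<omega>)) \<partial>M) = (\<Prod>i\<in>J. \<integral>\<omega>. h i (X i \<omega>) \<partial>M)"
proof -
  have iv: "indep_vars (\<lambda>_. borel) (\<lambda>i \<omega>. h i (X i \<omega>)) J"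
    by (rule indep_vars_compose2[OF indep_vars_subset[OF indep J(2)]]) (use h in auto)
  have int: "integrable M (\<lambda>\<omega>. h i (X i \<omega>))" if "i \<in> J" for i
  proof (rule integrable_const_bound[where B=1])
    show "AE x in M. norm (h i (X i x)) \<le> 1" using h(2)[OF that] by auto
    show "(\<lambda>\<omega>. h i (X i \<omega>)) \<in> borel_measurable M"
      using measurable_compose[OF rvX h(1)] that J by auto
  qed
  show ?thesis by (rule indep_vars_lebesgue_integral[OF J(1) iv int])
qed

lemma indep_blocks:
  fixes K :: "'b \<Rightarrow> ((nat \<times> nat) + (nat \<times> nat)) set" and F :: "'b \<Rightarrow> (((nat \<times> nat) + (nat \<times> nat)) \<Rightarrow> real) \<Rightarrow> real"
  assumes W: "finite W" and K: "\<And>j. j \<in> W \<Longrightarrow> K j \<subseteq> mag_index" and disj: "disjoint_family_on K W"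
    and F: "\<And>j. j \<in> W \<Longrightarrow> F j \<in> borel_measurable (PiM (K j) (\<lambda>_. borel))" "\<And>j x. j \<in> W \<Longrightarrow> \<bar>F j x\<bar> \<le> 1"
  shows "(\<integral>\<omega>. (\<Prod>j\<in>W. F j (restrict (\<lambda>i. X i \<omega>) (K j))) \<partial>M) = (\<Prod>j\<in>W. \<integral>\<omega>. F j (restrict (\<lambda>i. X i \<omega>) (K j)) \<partial>M)"
proof -
  have iv0: "indep_vars (\<lambda>j. PiM (K j) (\<lambda>_. borel)) (\<lambda>j \<omega>. restrict (\<lambda>i. X i \<omega>) (K j)) W"
    by (rule indep_vars_restrict[OF indep K disj])
  have iv: "indep_vars (\<lambda>_. borel) (\<lambda>j \<omega>. F j (restrict (\<lambda>i. X i \<omega>) (K j))) W"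
    by (rule indep_vars_compose2[OF iv0]) (use F in auto)
  have int: "integrable M (\<lambda>\<omega>. F j (restrict (\<lambda>i. X i \<omega>) (K j)))" if "j \<in> W" for j
  proof (rule integrable_const_bound[where B=1])
    show "AE x in M. norm (F j (restrict (\<lambda>i. X i x) (K j))) \<le> 1" using F(2)[OF that] by auto
    show "(\<lambda>\<omega>. F j (restrict (\<lambda>i. X i \<omega>) (K j))) \<in> borel_measurable M"
      using iv that unfolding indep_vars_def by auto
  qed
  show ?thesis by (rule indep_vars_lebesgue_integral[OF W iv int])
qed

end

definition cfg :: "nat \<Rightarrow> (nat \<Rightarrow> nat) set" where "cfg L = PiE {1..L} (\<lambda>_. {0,1})"

lemma finite_cfg: "finite (cfg L)"
  unfolding cfg_def by (intro finite_PiE) auto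

lemma prod_of_bool: "finite S \<Longrightarrow> (\<Prod>x\<in>S. (of_bool (P x) :: real)) = of_bool (\<forall>x\<in>S. P x)"
  by (induction S rule: finite_induct) auto

lemma cfg_unique:
  assumes x: "\<forall>l\<in>{1..L}. x l \<in> {0,1}"
  shows "(\<Sum>a\<in>cfg L. (\<Prod>l\<in>{1..L}. of_bool (x l = a l)) * f a) = (f (restrict x {1..L}) :: real)"
proof -
  define a0 where "a0 = restrict x {1..L}"
  have a0: "a0 \<in> cfg L" using x by (auto simp: cfg_def a0_def)
  have "(\<Prod>l\<in>{1..L}. of_bool (x l = a l)) * f a = (if a0 = a then f a else 0)" if a: "a \<in> cfg L" for a
  proof -
    have "(\<forall>l\<in>{1..L}. x l = a l) \<longleftrightarrow> a0 = a"
    proof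
      assume "\<forall>l\<in>{1..L}. x l = a l"
      then show "a0 = a" using a unfolding a0_def cfg_def
        by (intro ext) (auto simp: PiE_def extensional_def)
    next
      assume "a0 = a" then show "\<forall>l\<in>{1..L}. x l = a l" by (auto simp: a0_def)
    qed
    then show ?thesis by (simp add: prod_of_bool)
  qed
  then have "(\<Sum>a\<in>cfg L. (\<Prod>l\<in>{1..L}. of_bool (x l = a l)) * f a) = (\<Sum>a\<in>cfg L. if a0 = a then f a else 0)"
    by (intro sum.cong) auto
  also have "\<dots> = f a0" using a0 finite_cfg by simp
  finally show ?thesis by (simp add: a0_def)
qed

lemma cfg_prod_sum:
  "(\<Sum>b\<in>cfg L. \<Prod>l\<in>{1..L}. f l (b l)) = (\<Prod>l\<in>{1..L}. f l 0 + (f l 1 :: real))"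
proof -
  have "(\<Prod>l\<in>{1..L}. f l 0 + f l 1) = (\<Prod>l\<in>{1..L}. \<Sum>y\<in>{0,1}. f l y)" by simp
  also have "\<dots> = (\<Sum>b\<in>cfg L. \<Prod>l\<in>{1..L}. f l (b l))"
    unfolding cfg_def by (rule prod_sum_PiE) auto
  finally show ?thesis by simp
qed

lemma cfg_prod_count:
  assumes a: "a \<in> cfg L"
  shows "(\<Prod>l\<in>{1..L}. f (a l)) = f 1 ^ card {l\<in>{1..L}. a l = 1} * (f 0 :: real) ^ (L - card {l\<in>{1..L}. a l = 1})"
proof -
  define S where "S = {l\<in>{1..L}. a l = 1}"
  have S: "S \<subseteq> {1..L}" by (auto simp: S_def)
  have "(\<Prod>l\<in>{1..L}. f (a l)) = (\<Prod>l\<in>{1..L} - S. f (a l)) * (\<Prod>l\<in>S. f (a l))"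
    by (rule prod.subset_diff[OF S]) simp
  also have "(\<Prod>l\<in>S. f (a l)) = (\<Prod>l\<in>S. f 1)" by (intro prod.cong) (auto simp: S_def)
  also have "(\<Prod>l\<in>{1..L} - S. f (a l)) = (\<Prod>l\<in>{1..L} - S. f 0)"
  proof (intro prod.cong refl)
    fix l assume l: "l \<in> {1..L} - S"
    then have "a l \<in> {0,1}" using a unfolding cfg_def by (auto dest: PiE_mem)
    then show "f (a l) = f 0" using l by (auto simp: S_def)
  qed
  finally have eq: "(\<Prod>l\<in>{1..L}. f (a l)) = f 0 ^ card ({1..L} - S) * f 1 ^ card S" by simp
  have cd: "card ({1..L} - S) = L - card S" using S by (simp add: card_Diff_subset finite_subset)
  show ?thesis unfolding S_def[symmetric] eq cd by (rule mult.commute)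
qed

lemma cfg_count:
  fixes \<phi> :: "nat \<Rightarrow> real"
  shows "(\<Sum>a\<in>cfg L. \<phi> (card {l\<in>{1..L}. a l = 1})) = (\<Sum>k\<le>L. real (L choose k) * \<phi> k)"
proof -
  define g where "g a = {l\<in>{1..L}. a l = 1}" for a :: "nat \<Rightarrow> nat"
  define g' where "g' S = restrict (\<lambda>l. if l \<in> S then 1 else 0::nat) {1..L}" for S
  have bij: "bij_betw g (cfg L) (Pow {1..L})"
  proof (rule bij_betw_byWitness[where f'=g'])
    show "\<forall>a\<in>cfg L. g' (g a) = a"
      by (auto simp: g_def g'_def cfg_def PiE_def extensional_def fun_eq_iff)
    show "\<forall>S\<in>Pow {1..L}. g (g' S) = S"
    proof
      fix S assume S: "S \<in> Pow {1..L}"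
      have "l \<in> g (g' S) \<longleftrightarrow> l \<in> S" for l
        using S by (cases "l \<in> S") (auto simp: g_def g'_def)
      then show "g (g' S) = S" by blast
    qed
    show "g ` cfg L \<subseteq> Pow {1..L}" by (auto simp: g_def)
    show "g' ` Pow {1..L} \<subseteq> cfg L"
    proof
      fix a assume "a \<in> g' ` Pow {1..L}"
      then obtain S where aS: "a = g' S" by blast
      have "\<forall>l\<in>{1..L}. (if l \<in> S then 1 else 0::nat) \<in> {0,1}" by simp
      then show "a \<in> cfg L" unfolding aS g'_def cfg_def restrict_PiE_iff .
    qed
  qed
  have "(\<Sum>a\<in>cfg L. \<phi> (card (g a))) = (\<Sum>S\<in>Pow {1..L}. \<phi> (card S))"
    by (rule sum.reindex_bij_betw[OF bij])
  also have "\<dots> = (\<Sum>k\<in>{..L}. \<Sum>S\<in>{S. S \<in> Pow {1..L} \<and> card S = k}. \<phi> (card S))"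
  proof (rule sum.group[symmetric])
    show "card ` Pow {1..L} \<subseteq> {..L}"
    proof
      fix k assume "k \<in> card ` Pow {1..L}"
      then obtain S where S: "S \<subseteq> {1..L}" "k = card S" by blast
      have "card S \<le> card {1..L}" by (rule card_mono[OF _ S(1)]) simp
      then show "k \<in> {..L}" using S by simp
    qed
  qed auto
  also have "\<dots> = (\<Sum>k\<le>L. real (L choose k) * \<phi> k)"
  proof (intro sum.cong refl)
    fix k assume "k \<in> {..L}"
    have "(\<Sum>S\<in>{S. S \<in> Pow {1..L} \<and> card S = k}. \<phi> (card S)) = (\<Sum>S\<in>{S. S \<in> Pow {1..L} \<and> card S = k}. \<phi> k)"
      by (intro sum.cong) auto
    also have "\<dots> = real (card {S. S \<subseteq> {1..L} \<and> card S = k}) * \<phi> k" by simp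
    also have "card {S. S \<subseteq> {1..L} \<and> card S = k} = L choose k" using n_subsets[of "{1..L}" k] by simp
    finally show "(\<Sum>S\<in>{S. S \<in> Pow {1..L} \<and> card S = k}. \<phi> (card S)) = real (L choose k) * \<phi> k" .
  qed
  finally show ?thesis unfolding g_def .
qed

lemma meas_eq: "(\<lambda>x::real. of_bool (x = c) :: real) \<in> borel_measurable borel"
proof -
  have "(\<lambda>x::real. of_bool (x = c) :: real) = indicator {c}" by (auto simp: indicator_def)
  then show ?thesis by simp
qed

lemma meas_gt: "(\<lambda>x::real. of_bool (\<not> x \<le> c) :: real) \<in> borel_measurable borel"
proof -
  have "(\<lambda>x::real. of_bool (\<not> x \<le> c) :: real) = indicator {c<..}" by (auto simp: indicator_def)
  then show ?thesis by simp
qed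

context mag_model begin

lemma A01: "1 \<le> l \<Longrightarrow> 1 \<le> u \<Longrightarrow> \<omega> \<in> space M \<Longrightarrow> A l u \<omega> \<in> {0,1}"
  using A_vals by blast

lemma indep_prod_int:
  fixes h :: "((nat \<times> nat) + (nat \<times> nat)) \<Rightarrow> real \<Rightarrow> real"
  assumes J: "finite J" "J \<subseteq> mag_index"
    and h: "\<And>i. i \<in> J \<Longrightarrow> h i \<in> borel_measurable borel" "\<And>i x. i \<in> J \<Longrightarrow> \<bar>h i x\<bar> \<le> 1"
  shows "integrable M (\<lambda>\<omega>. (\<Prod>i\<in>J. h i (X i \<omega>)))"
proof -
  have iv: "indep_vars (\<lambda>_. borel) (\<lambda>i \<omega>. h i (X i \<omega>)) J"
    by (rule indep_vars_compose2[OF indep_vars_subset[OF indep J(2)]]) (use h in auto)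
  have int: "integrable M (\<lambda>\<omega>. h i (X i \<omega>))" if "i \<in> J" for i
  proof (rule integrable_const_bound[where B=1])
    show "AE x in M. norm (h i (X i x)) \<le> 1" using h(2)[OF that] by auto
    show "(\<lambda>\<omega>. h i (X i \<omega>)) \<in> borel_measurable M"
      using measurable_compose[OF rvX h(1)] that J by auto
  qed
  show ?thesis by (rule indep_vars_integrable[OF J(1) iv int])
qed

lemma expect_A: assumes "1 \<le> l" "1 \<le> u" "t \<in> {0,1}"
  shows "(\<integral>\<omega>. of_bool (real (A l u \<omega>) = real t) \<partial>M) = mu t"
proof -
  have "(\<integral>\<omega>. of_bool (real (A l u \<omega>) = real t) \<partial>M) = (\<integral>\<omega>. (if A l u \<omega> = t then 1 else 0) \<partial>M)"
    by (simp add: of_bool_def)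
  also have "\<dots> = prob {\<omega>\<in>space M. A l u \<omega> = t}" by (rule expect_ind[OF evA[OF assms(1,2)]])
  also have "\<dots> = mu t" by (rule probA[OF assms])
  finally show ?thesis .
qed

lemma expect_U: assumes "1 \<le> s" "s < t" "0 \<le> c" "c \<le> 1"
  shows "(\<integral>\<omega>. of_bool (\<not> U s t \<omega> \<le> c) \<partial>M) = 1 - c"
proof -
  have "(\<integral>\<omega>. of_bool (\<not> U s t \<omega> \<le> c) \<partial>M) = (\<integral>\<omega>. (if \<not> U s t \<omega> \<le> c then 1 else 0) \<partial>M)"
    by (simp add: of_bool_def)
  also have "\<dots> = prob {\<omega>\<in>space M. \<not> U s t \<omega> \<le> c}"
  proof (rule expect_ind)
    have "{\<omega>\<in>space M. \<not> U s t \<omega> \<le> c} = space M - {\<omega>\<in>space M. U s t \<omega> \<le> c}" by auto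
    then show "{\<omega>\<in>space M. \<not> U s t \<omega> \<le> c} \<in> events" using evU[OF assms(1,2)] by auto
  qed
  also have "{\<omega>\<in>space M. \<not> U s t \<omega> \<le> c} = space M - {\<omega>\<in>space M. U s t \<omega> \<le> c}" by auto
  also have "prob \<dots> = 1 - prob {\<omega>\<in>space M. U s t \<omega> \<le> c}" by (rule prob_compl[OF evU[OF assms(1,2)]])
  also have "\<dots> = 1 - c" using probU[OF assms] by simp
  finally show ?thesis .
qed

lemma cfg_vals: "a \<in> cfg L \<Longrightarrow> l \<in> {1..L} \<Longrightarrow> a l \<in> {0,1}"
  unfolding cfg_def by (auto dest: PiE_mem)

lemma expect_cfg_u:
  assumes u: "1 \<le> u" and a: "a \<in> cfg L"
  shows "(\<integral>\<omega>. (\<Prod>l\<in>{1..L}. of_bool (A l u \<omega> = a l)) \<partial>M) = (\<Prod>l\<in>{1..L}. mu (a l))"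
    and "integrable M (\<lambda>\<omega>. (\<Prod>l\<in>{1..L}. of_bool (A l u \<omega> = a l) :: real))"
proof -
  define J where "J = ((\<lambda>l. Inl (l, u)) ` {1..L} :: ((nat \<times> nat) + (nat \<times> nat)) set)"
  define h where "h (i::(nat \<times> nat) + (nat \<times> nat)) (x::real) = (of_bool (x = real (a (fst (projl i)))) :: real)" for i x
  have inj: "inj_on (\<lambda>l. Inl (l, u) :: (nat \<times> nat) + (nat \<times> nat)) {1..L}" by (auto simp: inj_on_def)
  have eq: "(\<Prod>l\<in>{1..L}. of_bool (A l u \<omega> = a l)) = (\<Prod>i\<in>J. h i (X i \<omega>))" for \<omega>
    unfolding J_def prod.reindex[OF inj] by (simp add: h_def mag_family_def)
  have J: "finite J" "J \<subseteq> mag_index" using u by (auto simp: J_def mag_index_def)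
  have hm: "h i \<in> borel_measurable borel" for i unfolding h_def by (rule meas_eq)
  have hb: "\<bar>h i x\<bar> \<le> 1" for i x by (simp add: h_def)
  have "(\<integral>\<omega>. (\<Prod>i\<in>J. h i (X i \<omega>)) \<partial>M) = (\<Prod>i\<in>J. \<integral>\<omega>. h i (X i \<omega>) \<partial>M)"
    by (rule indep_prod[OF J hm hb])
  also have "\<dots> = (\<Prod>l\<in>{1..L}. \<integral>\<omega>. of_bool (real (A l u \<omega>) = real (a l)) \<partial>M)"
    unfolding J_def prod.reindex[OF inj] by (simp add: h_def mag_family_def)
  also have "\<dots> = (\<Prod>l\<in>{1..L}. mu (a l))"
    by (intro prod.cong refl expect_A) (use u cfg_vals[OF a] in auto)
  finally show "(\<integral>\<omega>. (\<Prod>l\<in>{1..L}. of_bool (A l u \<omega> = a l)) \<partial>M) = (\<Prod>l\<in>{1..L}. mu (a l))"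
    unfolding eq .
  show "integrable M (\<lambda>\<omega>. (\<Prod>l\<in>{1..L}. of_bool (A l u \<omega> = a l) :: real))"
    unfolding eq by (rule indep_prod_int[OF J hm hb])
qed

lemma expect_cfg_edge:
  assumes w: "1 \<le> w" and st: "1 \<le> s" "s < t" and b: "b \<in> cfg L" and c: "0 \<le> c" "c \<le> 1"
  shows "(\<integral>\<omega>. (\<Prod>l\<in>{1..L}. of_bool (A l w \<omega> = b l)) * of_bool (\<not> U s t \<omega> \<le> c) \<partial>M) = (\<Prod>l\<in>{1..L}. mu (b l)) * (1 - c)"
    and "integrable M (\<lambda>\<omega>. (\<Prod>l\<in>{1..L}. of_bool (A l w \<omega> = b l)) * (of_bool (\<not> U s t \<omega> \<le> c) :: real))"
proof -
  define J0 where "J0 = ((\<lambda>l. Inl (l, w)) ` {1..L} :: ((nat \<times> nat) + (nat \<times> nat)) set)"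
  define J where "J = insert (Inr (s, t)) J0"
  define h where "h (i::(nat \<times> nat) + (nat \<times> nat)) (x::real) = (case i of Inl p \<Rightarrow> of_bool (x = real (b (fst p))) | Inr _ \<Rightarrow> (of_bool (\<not> x \<le> c) :: real))" for i x
  have inj: "inj_on (\<lambda>l. Inl (l, w) :: (nat \<times> nat) + (nat \<times> nat)) {1..L}" by (auto simp: inj_on_def)
  have nin: "Inr (s, t) \<notin> J0" by (auto simp: J0_def)
  have fin0: "finite J0" by (simp add: J0_def)
  have eq: "(\<Prod>l\<in>{1..L}. of_bool (A l w \<omega> = b l)) * of_bool (\<not> U s t \<omega> \<le> c) = (\<Prod>i\<in>J. h i (X i \<omega>))" for \<omega>
    unfolding J_def prod.insert[OF fin0 nin] unfolding J0_def prod.reindex[OF inj]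
    by (simp add: h_def mag_family_def mult.commute)
  have J: "finite J" "J \<subseteq> mag_index" using w st by (auto simp: J_def J0_def mag_index_def)
  have hm: "h i \<in> borel_measurable borel" for i
    unfolding h_def by (cases i) (auto intro: meas_eq meas_gt)
  have hb: "\<bar>h i x\<bar> \<le> 1" for i x by (cases i) (auto simp: h_def)
  have "(\<integral>\<omega>. (\<Prod>i\<in>J. h i (X i \<omega>)) \<partial>M) = (\<Prod>i\<in>J. \<integral>\<omega>. h i (X i \<omega>) \<partial>M)"
    by (rule indep_prod[OF J hm hb])
  also have "\<dots> = (\<integral>\<omega>. of_bool (\<not> U s t \<omega> \<le> c) \<partial>M) * (\<Prod>l\<in>{1..L}. \<integral>\<omega>. of_bool (real (A l w \<omega>) = real (b l)) \<partial>M)"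
    unfolding J_def prod.insert[OF fin0 nin] unfolding J0_def prod.reindex[OF inj]
    by (simp add: h_def mag_family_def)
  also have "(\<Prod>l\<in>{1..L}. \<integral>\<omega>. of_bool (real (A l w \<omega>) = real (b l)) \<partial>M) = (\<Prod>l\<in>{1..L}. mu (b l))"
    by (intro prod.cong refl expect_A) (use w cfg_vals[OF b] in auto)
  also have "(\<integral>\<omega>. of_bool (\<not> U s t \<omega> \<le> c) \<partial>M) = 1 - c" by (rule expect_U[OF st c])
  finally show "(\<integral>\<omega>. (\<Prod>l\<in>{1..L}. of_bool (A l w \<omega> = b l)) * of_bool (\<not> U s t \<omega> \<le> c) \<partial>M) = (\<Prod>l\<in>{1..L}. mu (b l)) * (1 - c)"
    unfolding eq by (simp add: mult.commute)
  show "integrable M (\<lambda>\<omega>. (\<Prod>l\<in>{1..L}. of_bool (A l w \<omega> = b l)) * (of_bool (\<not> U s t \<omega> \<le> c) :: real))"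
    unfolding eq by (rule indep_prod_int[OF J hm hb])
qed

end

lemma meas_gt2: assumes [measurable]: "f \<in> borel_measurable M" "g \<in> borel_measurable M"
  shows "(\<lambda>x. of_bool (\<not> f x \<le> (g x::real)) :: real) \<in> borel_measurable M"
  unfolding of_bool_def by measurable

lemma comp_meas: "i \<in> I \<Longrightarrow> (\<lambda>x. (c :: nat \<Rightarrow> real) (if x i = (1::real) then 1 else 0)) \<in> borel_measurable (PiM I (\<lambda>_. borel))"
  by measurable

lemma comp_eq_meas: "i \<in> I \<Longrightarrow> (\<lambda>x. of_bool (x i = (c::real)) :: real) \<in> borel_measurable (PiM I (\<lambda>_. borel))"
  unfolding of_bool_def by measurable

lemma comp_meas1: "i \<in> I \<Longrightarrow> (\<lambda>x. x i :: real) \<in> borel_measurable (PiM I (\<lambda>_. borel))"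
  by measurable

definition Kb :: "nat \<Rightarrow> nat \<Rightarrow> nat \<Rightarrow> ((nat \<times> nat) + (nat \<times> nat)) set" where
  "Kb u L w = (if w = u then (\<lambda>l. Inl (l, u)) ` {1..L}
     else insert (Inr (min u w, max u w)) ((\<lambda>l. Inl (l, w)) ` {1..L}))"

definition Fx :: "(nat \<Rightarrow> nat \<Rightarrow> real) \<Rightarrow> nat \<Rightarrow> nat \<Rightarrow> (nat \<Rightarrow> nat) \<Rightarrow> nat
    \<Rightarrow> (((nat \<times> nat) + (nat \<times> nat)) \<Rightarrow> real) \<Rightarrow> real" where
  "Fx q u L a w x = (if w = u then (\<Prod>l\<in>{1..L}. of_bool (x (Inl (l, u)) = real (a l)))
     else of_bool (\<not> x (Inr (min u w, max u w)) \<le> (\<Prod>l\<in>{1..L}. q (a l) (if x (Inl (l, w)) = 1 then 1 else 0))))"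

definition Fb :: "(nat \<Rightarrow> nat \<Rightarrow> real) \<Rightarrow> (nat \<Rightarrow> nat \<Rightarrow> 'w \<Rightarrow> nat) \<Rightarrow> (nat \<Rightarrow> nat \<Rightarrow> 'w \<Rightarrow> real)
    \<Rightarrow> nat \<Rightarrow> nat \<Rightarrow> (nat \<Rightarrow> nat) \<Rightarrow> nat \<Rightarrow> 'w \<Rightarrow> real" where
  "Fb q A U L u a w \<omega> = (if w = u then (\<Prod>l\<in>{1..L}. of_bool (A l u \<omega> = a l))
     else of_bool (\<not> U (min u w) (max u w) \<omega> \<le> (\<Prod>l\<in>{1..L}. q (a l) (A l w \<omega>))))"

lemma Kb_sub: "1 \<le> u \<Longrightarrow> 1 \<le> w \<Longrightarrow> Kb u L w \<subseteq> mag_index"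
  by (auto simp: Kb_def mag_index_def min_def max_def)

lemma Kb_disj: "disjoint_family_on (Kb u L) W"
  unfolding disjoint_family_on_def Kb_def by (auto simp: min_def max_def split: if_splits)

lemma Fx_meas: "Fx q u L a w \<in> borel_measurable (PiM (Kb u L w) (\<lambda>_. borel))"
proof (cases "w = u")
  case True
  have "(\<lambda>x. \<Prod>l\<in>{1..L}. of_bool (x (Inl (l, u)) = real (a l)) :: real) \<in> borel_measurable (PiM (Kb u L w) (\<lambda>_. borel))"
    by (intro borel_measurable_prod comp_eq_meas) (auto simp: Kb_def True)
  then show ?thesis using True unfolding Fx_def by simp
next
  case False
  have 1: "(\<lambda>x. x (Inr (min u w, max u w)) :: real) \<in> borel_measurable (PiM (Kb u L w) (\<lambda>_. borel))"
    by (rule comp_meas1) (use False in \<open>auto simp: Kb_def\<close>)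
  have 2: "(\<lambda>x. \<Prod>l\<in>{1..L}. q (a l) (if x (Inl (l, w)) = (1::real) then 1 else 0)) \<in> borel_measurable (PiM (Kb u L w) (\<lambda>_. borel))"
    by (intro borel_measurable_prod comp_meas) (use False in \<open>auto simp: Kb_def\<close>)
  show ?thesis using meas_gt2[OF 1 2] False unfolding Fx_def by simp
qed

lemma Fx_bound: "\<bar>Fx q u L a w x\<bar> \<le> 1"
  unfolding Fx_def by (simp add: prod_of_bool)

context mag_model begin

lemma Fx_eval:
  assumes \<omega>: "\<omega> \<in> space M" and uw: "1 \<le> u" "1 \<le> w"
  shows "Fx q u L a w (restrict (\<lambda>i. X i \<omega>) (Kb u L w)) = Fb q A U L u a w \<omega>"
proof (cases "w = u")
  case True
  then show ?thesis unfolding Fx_def Fb_def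
    by (intro if_cong refl prod.cong) (auto simp: Kb_def mag_family_def)
next
  case False
  have Inr: "Inr (min u w, max u w) \<in> Kb u L w" using False by (simp add: Kb_def)
  have Inl: "Inl (l, w) \<in> Kb u L w" if "l \<in> {1..L}" for l using that False by (auto simp: Kb_def)
  have "(\<Prod>l\<in>{1..L}. q (a l) (if restrict (\<lambda>i. X i \<omega>) (Kb u L w) (Inl (l, w)) = 1 then 1 else 0))
      = (\<Prod>l\<in>{1..L}. q (a l) (A l w \<omega>))"
  proof (intro prod.cong refl)
    fix l assume l: "l \<in> {1..L}"
    have "A l w \<omega> \<in> {0,1}" using A01[of l w \<omega>] l uw \<omega> by auto
    then show "q (a l) (if restrict (\<lambda>i. X i \<omega>) (Kb u L w) (Inl (l, w)) = 1 then 1 else 0) = q (a l) (A l w \<omega>)"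
      using Inl[OF l] by (auto simp: mag_family_def)
  qed
  moreover have "restrict (\<lambda>i. X i \<omega>) (Kb u L w) (Inr (min u w, max u w)) = U (min u w) (max u w) \<omega>"
    using Inr by (simp add: mag_family_def)
  ultimately show ?thesis using False unfolding Fx_def Fb_def by simp
qed

end

context mag_model begin

lemma qv: "a \<in> {0,1} \<Longrightarrow> b \<in> {0,1} \<Longrightarrow> 0 < q a b \<and> q a b < 1"
  using q by auto

lemma indep_blocks_int:
  fixes K :: "'b \<Rightarrow> ((nat \<times> nat) + (nat \<times> nat)) set" and F :: "'b \<Rightarrow> (((nat \<times> nat) + (nat \<times> nat)) \<Rightarrow> real) \<Rightarrow> real"
  assumes W: "finite W" and K: "\<And>j. j \<in> W \<Longrightarrow> K j \<subseteq> mag_index" and disj: "disjoint_family_on K W"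
    and F: "\<And>j. j \<in> W \<Longrightarrow> F j \<in> borel_measurable (PiM (K j) (\<lambda>_. borel))" "\<And>j x. j \<in> W \<Longrightarrow> \<bar>F j x\<bar> \<le> 1"
  shows "integrable M (\<lambda>\<omega>. (\<Prod>j\<in>W. F j (restrict (\<lambda>i. X i \<omega>) (K j))))"
proof -
  have iv0: "indep_vars (\<lambda>j. PiM (K j) (\<lambda>_. borel)) (\<lambda>j \<omega>. restrict (\<lambda>i. X i \<omega>) (K j)) W"
    by (rule indep_vars_restrict[OF indep K disj])
  have iv: "indep_vars (\<lambda>_. borel) (\<lambda>j \<omega>. F j (restrict (\<lambda>i. X i \<omega>) (K j))) W"
    by (rule indep_vars_compose2[OF iv0]) (use F in auto)
  have int: "integrable M (\<lambda>\<omega>. F j (restrict (\<lambda>i. X i \<omega>) (K j)))" if "j \<in> W" for j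
  proof (rule integrable_const_bound[where B=1])
    show "AE x in M. norm (F j (restrict (\<lambda>i. X i x) (K j))) \<le> 1" using F(2)[OF that] by auto
    show "(\<lambda>\<omega>. F j (restrict (\<lambda>i. X i \<omega>) (K j))) \<in> borel_measurable M"
      using iv that unfolding indep_vars_def by auto
  qed
  show ?thesis by (rule indep_vars_integrable[OF W iv int])
qed

lemma edge_expect:
  assumes u: "1 \<le> u" and w: "1 \<le> w" "w \<noteq> u" and a: "a \<in> cfg L"
  shows "(\<integral>\<omega>. of_bool (\<not> U (min u w) (max u w) \<omega> \<le> (\<Prod>l\<in>{1..L}. q (a l) (A l w \<omega>))) \<partial>M)
           = 1 - (\<Prod>l\<in>{1..L}. Gam mu q (a l))"
proof -
  define s where "s = min u w"
  define t where "t = max u w"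
  have st: "1 \<le> s" "s < t" using u w by (auto simp: s_def t_def)
  define c where "c b = (\<Prod>l\<in>{1..L}. q (a l) (b l))" for b :: "nat \<Rightarrow> nat"
  have c01: "0 \<le> c b \<and> c b \<le> 1" if b: "b \<in> cfg L" for b
  proof -
    have "0 \<le> q (a l) (b l) \<and> q (a l) (b l) \<le> 1" if "l \<in> {1..L}" for l
      using qv[OF cfg_vals[OF a that] cfg_vals[OF b that]] by auto
    then show ?thesis unfolding c_def by (auto intro: prod_nonneg prod_le_1)
  qed
  have ex: "(of_bool (\<not> U s t \<omega> \<le> (\<Prod>l\<in>{1..L}. q (a l) (A l w \<omega>))) :: real)
      = (\<Sum>b\<in>cfg L. (\<Prod>l\<in>{1..L}. of_bool (A l w \<omega> = b l)) * of_bool (\<not> U s t \<omega> \<le> c b))"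
    if \<omega>: "\<omega> \<in> space M" for \<omega>
  proof -
    have x: "\<forall>l\<in>{1..L}. A l w \<omega> \<in> {0,1}" using A01 w \<omega> by auto
    have ceq: "c (restrict (\<lambda>l. A l w \<omega>) {1..L}) = (\<Prod>l\<in>{1..L}. q (a l) (A l w \<omega>))"
      unfolding c_def by (intro prod.cong) auto
    have e1: "(\<Sum>b\<in>cfg L. (\<Prod>l\<in>{1..L}. of_bool (A l w \<omega> = b l)) * of_bool (\<not> U s t \<omega> \<le> c b))
        = (of_bool (\<not> U s t \<omega> \<le> c (restrict (\<lambda>l. A l w \<omega>) {1..L})) :: real)"
      by (rule cfg_unique[OF x])
    have "(of_bool (\<not> U s t \<omega> \<le> (\<Prod>l\<in>{1..L}. q (a l) (A l w \<omega>))) :: real) = of_bool (\<not> U s t \<omega> \<le> c (restrict (\<lambda>l. A l w \<omega>) {1..L}))"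
      by (simp only: ceq)
    then show ?thesis by (rule trans[OF _ e1[symmetric]])
  qed
  have "(\<integral>\<omega>. (of_bool (\<not> U s t \<omega> \<le> (\<Prod>l\<in>{1..L}. q (a l) (A l w \<omega>))) :: real) \<partial>M)
      = (\<integral>\<omega>. (\<Sum>b\<in>cfg L. (\<Prod>l\<in>{1..L}. of_bool (A l w \<omega> = b l)) * of_bool (\<not> U s t \<omega> \<le> c b)) \<partial>M)"
    by (rule Bochner_Integration.integral_cong[OF refl ex])
  also have "\<dots> = (\<Sum>b\<in>cfg L. \<integral>\<omega>. (\<Prod>l\<in>{1..L}. of_bool (A l w \<omega> = b l)) * of_bool (\<not> U s t \<omega> \<le> c b) \<partial>M)"
    by (rule Bochner_Integration.integral_sum) (use expect_cfg_edge(2)[OF w(1) st] c01 in auto)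
  also have "\<dots> = (\<Sum>b\<in>cfg L. (\<Prod>l\<in>{1..L}. mu (b l)) * (1 - c b))"
    by (intro sum.cong refl expect_cfg_edge(1)[OF w(1) st]) (use c01 in auto)
  also have "\<dots> = (\<Sum>b\<in>cfg L. \<Prod>l\<in>{1..L}. mu (b l)) - (\<Sum>b\<in>cfg L. \<Prod>l\<in>{1..L}. mu (b l) * q (a l) (b l))"
    by (simp add: c_def right_diff_distrib prod.distrib sum_subtractf)
  also have "\<dots> = (\<Prod>l\<in>{1..L}. mu 0 + mu 1) - (\<Prod>l\<in>{1..L}. mu 0 * q (a l) 0 + mu 1 * q (a l) 1)"
  proof -
    have s1: "(\<Sum>b\<in>cfg L. \<Prod>l\<in>{1..L}. mu (b l)) = (\<Prod>l\<in>{1..L}. mu 0 + mu 1)"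
      using cfg_prod_sum[where f="\<lambda>l y. mu y" and L=L] by simp
    have s2: "(\<Sum>b\<in>cfg L. \<Prod>l\<in>{1..L}. mu (b l) * q (a l) (b l)) = (\<Prod>l\<in>{1..L}. mu 0 * q (a l) 0 + mu 1 * q (a l) 1)"
      using cfg_prod_sum[where f="\<lambda>l y. mu y * q (a l) y" and L=L] by simp
    show ?thesis unfolding s1 s2 ..
  qed
  also have "\<dots> = 1 - (\<Prod>l\<in>{1..L}. Gam mu q (a l))" using mu by (simp add: Gam_def)
  finally show ?thesis by (simp add: s_def t_def)
qed

lemma iso_expand:
  assumes u: "1 \<le> u" "u \<le> n" and \<omega>: "\<omega> \<in> space M"
  shows "of_bool (\<forall>v\<in>{1..n}. \<not> edge q A U L u v \<omega>) = (\<Sum>a\<in>cfg L. \<Prod>w\<in>{1..n}. Fb q A U L u a w \<omega>)"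
proof -
  define f where "f a = (\<Prod>w\<in>{1..n} - {u}. of_bool (\<not> U (min u w) (max u w) \<omega> \<le> (\<Prod>l\<in>{1..L}. q (a l) (A l w \<omega>))) :: real)" for a
  have rhs: "(\<Prod>w\<in>{1..n}. Fb q A U L u a w \<omega>) = (\<Prod>l\<in>{1..L}. of_bool (A l u \<omega> = a l)) * f a" for a
  proof -
    have "(\<Prod>w\<in>{1..n}. Fb q A U L u a w \<omega>) = Fb q A U L u a u \<omega> * (\<Prod>w\<in>{1..n} - {u}. Fb q A U L u a w \<omega>)"
      by (rule prod.remove) (use u in auto)
    also have "(\<Prod>w\<in>{1..n} - {u}. Fb q A U L u a w \<omega>) = f a"
      unfolding f_def by (intro prod.cong refl) (auto simp: Fb_def)
    finally show ?thesis by (simp add: Fb_def)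
  qed
  have x: "\<forall>l\<in>{1..L}. A l u \<omega> \<in> {0,1}" using A01 u \<omega> by auto
  have "(\<Sum>a\<in>cfg L. \<Prod>w\<in>{1..n}. Fb q A U L u a w \<omega>) = f (restrict (\<lambda>l. A l u \<omega>) {1..L})"
    unfolding rhs by (rule cfg_unique[OF x])
  also have "\<dots> = (\<Prod>w\<in>{1..n} - {u}. of_bool (\<not> U (min u w) (max u w) \<omega> \<le> QL q A L u w \<omega>))"
    unfolding f_def QL_def by (intro prod.cong refl arg_cong[where f=of_bool] arg_cong[where f=Not]
        arg_cong[where f="\<lambda>x. U _ _ \<omega> \<le> x"]) auto
  also have "\<dots> = of_bool (\<forall>w\<in>{1..n} - {u}. \<not> U (min u w) (max u w) \<omega> \<le> QL q A L u w \<omega>)"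
    by (rule prod_of_bool) simp
  also have "(\<forall>w\<in>{1..n} - {u}. \<not> U (min u w) (max u w) \<omega> \<le> QL q A L u w \<omega>) \<longleftrightarrow> (\<forall>v\<in>{1..n}. \<not> edge q A U L u v \<omega>)"
    by (auto simp: edge_def)
  finally show ?thesis by simp
qed

lemma iso_prob:
  assumes u: "1 \<le> u" "u \<le> n"
  shows "(\<integral>\<omega>. of_bool (\<forall>v\<in>{1..n}. \<not> edge q A U L u v \<omega>) \<partial>M)
      = (\<Sum>a\<in>cfg L. (\<Prod>l\<in>{1..L}. mu (a l)) * (1 - (\<Prod>l\<in>{1..L}. Gam mu q (a l))) ^ (n - 1))"
    and "integrable M (\<lambda>\<omega>. of_bool (\<forall>v\<in>{1..n}. \<not> edge q A U L u v \<omega>) :: real)"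
proof -
  have Ksub: "\<And>j. j \<in> {1..n} \<Longrightarrow> Kb u L j \<subseteq> mag_index" using u by (intro Kb_sub) auto
  have blk_int: "integrable M (\<lambda>\<omega>. \<Prod>w\<in>{1..n}. Fb q A U L u a w \<omega>)" for a
  proof -
    have int1: "integrable M (\<lambda>\<omega>. (\<Prod>j\<in>{1..n}. Fx q u L a j (restrict (\<lambda>i. X i \<omega>) (Kb u L j))))"
      by (rule indep_blocks_int[OF _ Ksub Kb_disj Fx_meas Fx_bound]) auto
    have eq: "\<omega> \<in> space M \<Longrightarrow> (\<Prod>j\<in>{1..n}. Fx q u L a j (restrict (\<lambda>i. X i \<omega>) (Kb u L j))) = (\<Prod>w\<in>{1..n}. Fb q A U L u a w \<omega>)" for \<omega>
      by (intro prod.cong refl Fx_eval) (use u in auto)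
    have "integrable M (\<lambda>\<omega>. (\<Prod>j\<in>{1..n}. Fx q u L a j (restrict (\<lambda>i. X i \<omega>) (Kb u L j)))) = integrable M (\<lambda>\<omega>. \<Prod>w\<in>{1..n}. Fb q A U L u a w \<omega>)"
      by (intro Bochner_Integration.integrable_cong refl eq)
    then show ?thesis using int1 by simp
  qed
  have blk: "(\<integral>\<omega>. (\<Prod>w\<in>{1..n}. Fb q A U L u a w \<omega>) \<partial>M) = (\<Prod>w\<in>{1..n}. \<integral>\<omega>. Fb q A U L u a w \<omega> \<partial>M)" for a
  proof -
    have "(\<integral>\<omega>. (\<Prod>w\<in>{1..n}. Fb q A U L u a w \<omega>) \<partial>M) = (\<integral>\<omega>. (\<Prod>j\<in>{1..n}. Fx q u L a j (restrict (\<lambda>i. X i \<omega>) (Kb u L j))) \<partial>M)"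
      by (intro Bochner_Integration.integral_cong refl prod.cong Fx_eval[symmetric]) (use u in auto)
    also have "\<dots> = (\<Prod>j\<in>{1..n}. \<integral>\<omega>. Fx q u L a j (restrict (\<lambda>i. X i \<omega>) (Kb u L j)) \<partial>M)"
      by (rule indep_blocks[OF _ Ksub Kb_disj Fx_meas Fx_bound]) auto
    also have "\<dots> = (\<Prod>w\<in>{1..n}. \<integral>\<omega>. Fb q A U L u a w \<omega> \<partial>M)"
      by (intro prod.cong refl Bochner_Integration.integral_cong Fx_eval) (use u in auto)
    finally show ?thesis .
  qed
  have each: "(\<Prod>w\<in>{1..n}. \<integral>\<omega>. Fb q A U L u a w \<omega> \<partial>M)
      = (\<Prod>l\<in>{1..L}. mu (a l)) * (1 - (\<Prod>l\<in>{1..L}. Gam mu q (a l))) ^ (n - 1)" if a: "a \<in> cfg L" for a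
  proof -
    have "(\<Prod>w\<in>{1..n}. \<integral>\<omega>. Fb q A U L u a w \<omega> \<partial>M)
        = (\<integral>\<omega>. Fb q A U L u a u \<omega> \<partial>M) * (\<Prod>w\<in>{1..n} - {u}. \<integral>\<omega>. Fb q A U L u a w \<omega> \<partial>M)"
      by (rule prod.remove) (use u in auto)
    also have "(\<integral>\<omega>. Fb q A U L u a u \<omega> \<partial>M) = (\<Prod>l\<in>{1..L}. mu (a l))"
      unfolding Fb_def using expect_cfg_u(1)[OF u(1) a] by simp
    also have "(\<Prod>w\<in>{1..n} - {u}. \<integral>\<omega>. Fb q A U L u a w \<omega> \<partial>M) = (\<Prod>w\<in>{1..n} - {u}. 1 - (\<Prod>l\<in>{1..L}. Gam mu q (a l)))"
    proof (intro prod.cong refl)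
      fix w assume w: "w \<in> {1..n} - {u}"
      then have "(\<integral>\<omega>. Fb q A U L u a w \<omega> \<partial>M) = (\<integral>\<omega>. of_bool (\<not> U (min u w) (max u w) \<omega> \<le> (\<Prod>l\<in>{1..L}. q (a l) (A l w \<omega>))) \<partial>M)"
        by (simp add: Fb_def)
      also have "\<dots> = 1 - (\<Prod>l\<in>{1..L}. Gam mu q (a l))" using w by (intro edge_expect[OF u(1) _ _ a]) auto
      finally show "(\<integral>\<omega>. Fb q A U L u a w \<omega> \<partial>M) = 1 - (\<Prod>l\<in>{1..L}. Gam mu q (a l))" .
    qed
    also have "\<dots> = (1 - (\<Prod>l\<in>{1..L}. Gam mu q (a l))) ^ (n - 1)" using u by simp
    finally show ?thesis .
  qed
  have "(\<integral>\<omega>. of_bool (\<forall>v\<in>{1..n}. \<not> edge q A U L u v \<omega>) \<partial>M) = (\<integral>\<omega>. (\<Sum>a\<in>cfg L. \<Prod>w\<in>{1..n}. Fb q A U L u a w \<omega>) \<partial>M)"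
    by (intro Bochner_Integration.integral_cong refl iso_expand u)
  also have "\<dots> = (\<Sum>a\<in>cfg L. \<integral>\<omega>. (\<Prod>w\<in>{1..n}. Fb q A U L u a w \<omega>) \<partial>M)"
    by (rule Bochner_Integration.integral_sum) (rule blk_int)
  also have "\<dots> = (\<Sum>a\<in>cfg L. (\<Prod>l\<in>{1..L}. mu (a l)) * (1 - (\<Prod>l\<in>{1..L}. Gam mu q (a l))) ^ (n - 1))"
    by (intro sum.cong refl trans[OF blk each])
  finally show "(\<integral>\<omega>. of_bool (\<forall>v\<in>{1..n}. \<not> edge q A U L u v \<omega>) \<partial>M)
      = (\<Sum>a\<in>cfg L. (\<Prod>l\<in>{1..L}. mu (a l)) * (1 - (\<Prod>l\<in>{1..L}. Gam mu q (a l))) ^ (n - 1))" .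
  have int1: "integrable M (\<lambda>\<omega>. (\<Sum>a\<in>cfg L. \<Prod>w\<in>{1..n}. Fb q A U L u a w \<omega>))"
    by (intro Bochner_Integration.integrable_sum blk_int)
  have eq: "\<omega> \<in> space M \<Longrightarrow> (\<Sum>a\<in>cfg L. \<Prod>w\<in>{1..n}. Fb q A U L u a w \<omega>) = (of_bool (\<forall>v\<in>{1..n}. \<not> edge q A U L u v \<omega>) :: real)" for \<omega>
    using iso_expand[OF u] by simp
  show "integrable M (\<lambda>\<omega>. of_bool (\<forall>v\<in>{1..n}. \<not> edge q A U L u v \<omega>) :: real)"
  proof -
    have "integrable M (\<lambda>\<omega>. (\<Sum>a\<in>cfg L. \<Prod>w\<in>{1..n}. Fb q A U L u a w \<omega>)) = integrable M (\<lambda>\<omega>. of_bool (\<forall>v\<in>{1..n}. \<not> edge q A U L u v \<omega>) :: real)"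
      by (intro Bochner_Integration.integrable_cong refl eq)
    then show ?thesis using int1 by simp
  qed
qed

lemma expect_count:
  "(\<integral>\<omega>. real (isolated_count q A U n L \<omega>) \<partial>M)
    = real n * (\<Sum>k\<le>L. real (L choose k) * mu 1 ^ k * (1 - mu 1) ^ (L - k)
        * (1 - Gam mu q 1 ^ k * Gam mu q 0 ^ (L - k)) ^ (n - 1))"
proof -
  define S where "S = (\<Sum>a\<in>cfg L. (\<Prod>l\<in>{1..L}. mu (a l)) * (1 - (\<Prod>l\<in>{1..L}. Gam mu q (a l))) ^ (n - 1))"
  have cnt: "real (isolated_count q A U n L \<omega>) = (\<Sum>u\<in>{1..n}. of_bool (\<forall>v\<in>{1..n}. \<not> edge q A U L u v \<omega>))" for \<omega>
    unfolding isolated_count_def by (simp add: sum.inter_filter[symmetric] of_bool_def)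
  have "(\<integral>\<omega>. real (isolated_count q A U n L \<omega>) \<partial>M) = (\<integral>\<omega>. (\<Sum>u\<in>{1..n}. of_bool (\<forall>v\<in>{1..n}. \<not> edge q A U L u v \<omega>)) \<partial>M)"
    unfolding cnt ..
  also have "\<dots> = (\<Sum>u\<in>{1..n}. \<integral>\<omega>. of_bool (\<forall>v\<in>{1..n}. \<not> edge q A U L u v \<omega>) \<partial>M)"
    by (rule Bochner_Integration.integral_sum[where f="\<lambda>u \<omega>. of_bool (\<forall>v\<in>{1..n}. \<not> edge q A U L u v \<omega>) :: real"]) (rule iso_prob(2); simp)
  also have "\<dots> = (\<Sum>u\<in>{1..n}. S)"
    unfolding S_def by (intro sum.cong refl iso_prob(1)) auto
  also have "\<dots> = real n * S" by simp
  also have "S = (\<Sum>a\<in>cfg L. (\<lambda>k. mu 1 ^ k * mu 0 ^ (L - k) * (1 - Gam mu q 1 ^ k * Gam mu q 0 ^ (L - k)) ^ (n - 1))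
                   (card {l\<in>{1..L}. a l = 1}))"
    unfolding S_def
  proof (intro sum.cong refl)
    fix a assume a: "a \<in> cfg L"
    have p1: "(\<Prod>l\<in>{1..L}. mu (a l)) = mu 1 ^ card {l\<in>{1..L}. a l = 1} * mu 0 ^ (L - card {l\<in>{1..L}. a l = 1})"
      by (rule cfg_prod_count[OF a])
    have p2: "(\<Prod>l\<in>{1..L}. Gam mu q (a l)) = Gam mu q 1 ^ card {l\<in>{1..L}. a l = 1} * Gam mu q 0 ^ (L - card {l\<in>{1..L}. a l = 1})"
      by (rule cfg_prod_count[OF a])
    show "(\<Prod>l\<in>{1..L}. mu (a l)) * (1 - (\<Prod>l\<in>{1..L}. Gam mu q (a l))) ^ (n - 1) =
      (\<lambda>k. mu 1 ^ k * mu 0 ^ (L - k) * (1 - Gam mu q 1 ^ k * Gam mu q 0 ^ (L - k)) ^ (n - 1)) (card {l\<in>{1..L}. a l = 1})"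
      unfolding p1 p2 by (rule refl)
  qed
  also have "\<dots> = (\<Sum>k\<le>L. real (L choose k) * (mu 1 ^ k * mu 0 ^ (L - k) * (1 - Gam mu q 1 ^ k * Gam mu q 0 ^ (L - k)) ^ (n - 1)))"
    by (rule cfg_count)
  also have "mu 0 = 1 - mu 1" using mu by simp
  finally show ?thesis by (simp add: mult.assoc)
qed

end

theorem proposition3:
  fixes M :: "'w measure"
    and mu :: "nat \<Rightarrow> real" and q :: "nat \<Rightarrow> nat \<Rightarrow> real"
    and A :: "nat \<Rightarrow> nat \<Rightarrow> 'w \<Rightarrow> nat" and U :: "nat \<Rightarrow> nat \<Rightarrow> 'w \<Rightarrow> real"
    and \<rho> \<nu> :: real and L :: "nat \<Rightarrow> nat"
  assumes mu: "0 < mu 0" "0 < mu 1" "mu 0 + mu 1 = 1"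
    and q: "\<forall>a\<in>{0,1}. \<forall>b\<in>{0,1}. 0 < q a b \<and> q a b < 1" "q 0 1 = q 1 0"
    and M: "prob_space M"
    and indep: "prob_space.indep_vars M (\<lambda>_. borel) (mag_family A U) mag_index"
    and A_vals: "\<forall>l\<ge>1. \<forall>u\<ge>1. \<forall>\<omega>\<in>space M. A l u \<omega> \<in> {0, 1}"
    and A_dist: "\<forall>l\<ge>1. \<forall>u\<ge>1. measure M {\<omega>\<in>space M. A l u \<omega> = 1} = mu 1"
    and U_dist: "\<forall>u v. 1 \<le> u \<and> u < v \<longrightarrow>
                   distr M borel (U u v) = uniform_measure lborel {0..1::real}"
    and rho: "0 < \<rho>"
    and Gam: "Gam mu q 0 < Gam mu q 1"
    and cond: "1 + \<rho> * ln (mu 0) < 0"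
    and nu: "0 < \<nu>" "\<nu> < mu 1" "1 + \<rho> * ln (G \<nu> (mu 1)) = 0"
    and adm: "admissible \<rho> L"
  shows "(1 + \<rho> * ln (Gam mu q 1 powr \<nu> * Gam mu q 0 powr (1 - \<nu>)) < 0 \<longrightarrow>
            filterlim (\<lambda>n. integral\<^sup>L M (\<lambda>\<omega>. real (isolated_count q A U n (L n) \<omega>))) at_top sequentially)
       \<and> (1 + \<rho> * ln (Gam mu q 1 powr \<nu> * Gam mu q 0 powr (1 - \<nu>)) > 0 \<longrightarrow>
            (\<lambda>n. integral\<^sup>L M (\<lambda>\<omega>. real (isolated_count q A U n (L n) \<omega>))) \<longlonglongrightarrow> 0)"
proof -
  interpret m: mag_model M mu q A U
    by (rule mag_model.intro[OF M], unfold_locales) (use mu q indep A_vals A_dist U_dist in auto)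
  define g0 where "g0 = Gam mu q 0"
  define g1 where "g1 = Gam mu q 1"
  have E: "integral\<^sup>L M (\<lambda>\<omega>. real (isolated_count q A U n (L n) \<omega>))
     = real n * (\<Sum>k\<le>L n. real (L n choose k) * mu 1 ^ k * (1 - mu 1) ^ (L n - k)
        * (1 - g1 ^ k * g0 ^ (L n - k)) ^ (n - 1))" for n
    unfolding g0_def g1_def by (rule m.expect_count)
  have Gv: "0 < Gam mu q a \<and> Gam mu q a < 1" if a: "a \<in> {0,1}" for a
  proof -
    have "0 < q a 0" "q a 0 < 1" "0 < q a 1" "q a 1 < 1" using q(1) a by auto
    then have "0 < mu 0 * q a 0 + mu 1 * q a 1" using mu by (intro add_pos_pos mult_pos_pos) auto
    moreover have "mu 0 * q a 0 + mu 1 * q a 1 < mu 0 * 1 + mu 1 * 1"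
      using mu \<open>q a 0 < 1\<close> \<open>q a 1 < 1\<close> by (intro add_strict_mono mult_strict_left_mono) auto
    ultimately show ?thesis using mu by (simp add: Gam_def)
  qed
  have g: "0 < g0" "g0 < g1" "g1 < 1" using Gv[of 0] Gv[of 1] Gam by (auto simp: g0_def g1_def)
  have m1: "0 < mu 1" "mu 1 < 1" using mu by auto
  have Lrat: "(\<lambda>n. real (L n) / ln (real n)) \<longlonglongrightarrow> \<rho>"
  proof -
    have eq: "(\<lambda>n. real (L n)) \<sim>[sequentially] (\<lambda>n. \<rho> * ln (real n))" and Lpos: "\<forall>n. 0 < L n"
      using adm by (auto simp: admissible_def)
    have "((\<lambda>n. real (L n) / (\<rho> * ln (real n))) \<longlongrightarrow> 1) sequentially"
      by (rule asymp_equivD_strong[OF eq]) (use Lpos in auto)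
    then have "(\<lambda>n. \<rho> * (real (L n) / (\<rho> * ln (real n)))) \<longlonglongrightarrow> \<rho> * 1"
      by (intro tendsto_mult tendsto_const)
    moreover have "\<rho> * (real (L n) / (\<rho> * ln (real n))) = real (L n) / ln (real n)" for n
      using rho by simp
    ultimately show ?thesis by simp
  qed
  have hh: "ln (Gam mu q 1 powr \<nu> * Gam mu q 0 powr (1 - \<nu>)) = \<nu> * ln g1 + (1 - \<nu>) * ln g0"
    using g by (simp add: ln_mult ln_powr g0_def g1_def)
  show ?thesis
  proof (intro conjI impI)
    assume h: "1 + \<rho> * ln (Gam mu q 1 powr \<nu> * Gam mu q 0 powr (1 - \<nu>)) < 0"
    show "filterlim (\<lambda>n. integral\<^sup>L M (\<lambda>\<omega>. real (isolated_count q A U n (L n) \<omega>))) at_top sequentially"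
      unfolding E by (rule asym_inf[OF m1 g rho nu Lrat]) (use h hh in simp)
  next
    assume h: "1 + \<rho> * ln (Gam mu q 1 powr \<nu> * Gam mu q 0 powr (1 - \<nu>)) > 0"
    show "(\<lambda>n. integral\<^sup>L M (\<lambda>\<omega>. real (isolated_count q A U n (L n) \<omega>))) \<longlonglongrightarrow> 0"
      unfolding E by (rule asym_zero[OF m1 g rho nu Lrat]) (use h hh in simp)
  qed
qed

end
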